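(* Consider the Normal Partizan Domination game on a star $K_{1,n}$ whose universal (center) vertex has color $A$, with $a$ leaves of color $A$, $b$ leaves of color $B$ and $c=n-a-b\geq 1$ leaves of color $C$. If $a=0$, the value is $(n-1)\cdot\uparrow$ if $n$ is even and $(n-1)\cdot\uparrow*$ if $n$ is odd. If $a>0$, the value is $J$ if $c$ is even and $J*$ if $c$ is odd, where $J$ is the value of the game on the star obtained by removing the $c$ leaves of color $C$ (keeping all other colors). If instead the universal vertex has color $B$, the value is $-J'$, where $J'$ is the value of the game obtained by interchanging the colors $A$ and $B$ on all vertices.
   Context: Normal Partizan Domination game: a finite graph $G$ has each vertex colored $A$, $B$ or $C$. Alice and Bob alternately select a vertex; Alice may only select vertices colored $A$ or $C$, Bob only vertices colored $B$ or $C$. A vertex $u$ dominates $v$ if $u=v$ or $uv$ is an edge. A vertex may be selected only if it is playable, i.e. it dominates at least one vertex not dominated by the previously selected vertices; the game ends when the selected vertices form a dominating set. Under normal play the player unable to move loses. The game is regarded as a partizan combinatorial game with Alice as Left and Bob as Right, and its value is its value in Conway's combinatorial game theory ($\{X\mid Y\}$ has Left options $X$ and Right options $Y$; $G+H$ is the disjunctive sum; $-G$ swaps Left and Right; $G=H$ iff $G+(-H)$ is a second-player win). Notation: $*=\{0\mid 0\}$; $\uparrow=\{0\mid *\}$; $m\cdot\uparrow$ is the sum of $m$ copies of $\uparrow$ (and $0\cdot\uparrow=0$); $J*$ denotes $J+*$. *)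

theory Defs
  imports Main
begin

datatype game = Game "game list" "game list"

fun leftopts :: "game \<Rightarrow> game list" where "leftopts (Game L R) = L"
fun rightopts :: "game \<Rightarrow> game list" where "rightopts (Game L R) = R"

fun gneg :: "game \<Rightarrow> game" where
  "gneg (Game L R) = Game (map gneg R) (map gneg L)"

function gplus :: "game \<Rightarrow> game \<Rightarrow> game" where
  "gplus (Game L R) (Game L' R') =
     Game (map (\<lambda>x. gplus x (Game L' R')) L @ map (\<lambda>y. gplus (Game L R) y) L')
          (map (\<lambda>x. gplus x (Game L' R')) R @ map (\<lambda>y. gplus (Game L R) y) R')"
  by pat_completeness auto
termination
  by (relation "measure (\<lambda>(g, h). size g + size h)")
     (auto dest!: size_list_estimation'[OF _ order.refl, of _ _ size])

fun lwins_first :: "game \<Rightarrow> bool" and rwins_first :: "game \<Rightarrow> bool" where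
  "lwins_first (Game L R) = (\<exists>x\<in>set L. \<not> rwins_first x)"
| "rwins_first (Game L R) = (\<exists>x\<in>set R. \<not> lwins_first x)"

definition second_player_win :: "game \<Rightarrow> bool" where
  "second_player_win G \<longleftrightarrow> \<not> lwins_first G \<and> \<not> rwins_first G"

definition game_eq :: "game \<Rightarrow> game \<Rightarrow> bool" (infix "=\<^sub>g" 50) where
  "G =\<^sub>g H \<longleftrightarrow> second_player_win (gplus G (gneg H))"

definition gzero :: game where "gzero = Game [] []"
definition gstar :: game where "gstar = Game [gzero] [gzero]"
definition gup :: game where "gup = Game [gzero] [gstar]"

fun up_times :: "nat \<Rightarrow> game" where
  "up_times 0 = gzero"
| "up_times (Suc m) = gplus gup (up_times m)"

datatype color = CA | CB | CC

text \<open>Graph: finite vertex set V of naturals, symmetric adjacency E.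
  Closed neighbourhood of v inside V.\<close>
definition cnbhd :: "nat set \<Rightarrow> (nat \<Rightarrow> nat \<Rightarrow> bool) \<Rightarrow> nat \<Rightarrow> nat set" where
  "cnbhd V E v = {u \<in> V. u = v \<or> E v u}"

text \<open>v is playable when D is the set of already dominated vertices.\<close>
definition playable :: "nat set \<Rightarrow> (nat \<Rightarrow> nat \<Rightarrow> bool) \<Rightarrow> nat set \<Rightarrow> nat \<Rightarrow> bool" where
  "playable V E D v \<longleftrightarrow> v \<in> V \<and> \<not> cnbhd V E v \<subseteq> D"

definition alice_col :: "color \<Rightarrow> bool" where "alice_col c \<longleftrightarrow> c = CA \<or> c = CC"
definition bob_col :: "color \<Rightarrow> bool" where "bob_col c \<longleftrightarrow> c = CB \<or> c = CC"

text \<open>Game tree from position D (dominated set), with fuel k.  Every move dominates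
  at least one new vertex, so fuel card V never runs out before the game ends.\<close>
fun dgame_aux :: "nat \<Rightarrow> nat set \<Rightarrow> (nat \<Rightarrow> nat \<Rightarrow> bool) \<Rightarrow> (nat \<Rightarrow> color) \<Rightarrow> nat set \<Rightarrow> game" where
  "dgame_aux 0 V E col D = Game [] []"
| "dgame_aux (Suc k) V E col D =
     Game (map (\<lambda>v. dgame_aux k V E col (D \<union> cnbhd V E v))
             (filter (\<lambda>v. alice_col (col v) \<and> playable V E D v) (sorted_list_of_set V)))
          (map (\<lambda>v. dgame_aux k V E col (D \<union> cnbhd V E v))
             (filter (\<lambda>v. bob_col (col v) \<and> playable V E D v) (sorted_list_of_set V)))"

definition dom_game :: "nat set \<Rightarrow> (nat \<Rightarrow> nat \<Rightarrow> bool) \<Rightarrow> (nat \<Rightarrow> color) \<Rightarrow> game" where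
  "dom_game V E col = dgame_aux (card V) V E col {}"

text \<open>Star K_{1,n}: vertex 0 is the centre, vertices 1..n the leaves.\<close>
definition star_edge :: "nat \<Rightarrow> nat \<Rightarrow> bool" where
  "star_edge u v \<longleftrightarrow> (u = 0 \<and> v \<noteq> 0) \<or> (v = 0 \<and> u \<noteq> 0)"

definition swapAB :: "color \<Rightarrow> color" where
  "swapAB c = (case c of CA \<Rightarrow> CB | CB \<Rightarrow> CA | CC \<Rightarrow> CC)"

end

theory Submission
  imports Defs
begin
lemma size_L: "x \<in> set L \<Longrightarrow> size x < size (Game L R)"
  using size_list_estimation'[of x L "size x" size] by simp
lemma size_R: "x \<in> set R \<Longrightarrow> size x < size (Game L R)"
  using size_list_estimation'[of x R "size x" size] by simp

lemma size_leftopts: "x \<in> set (leftopts G) \<Longrightarrow> size x < size G"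
  by (cases G) (simp only: leftopts.simps size_L)
lemma size_rightopts: "x \<in> set (rightopts G) \<Longrightarrow> size x < size G"
  by (cases G) (simp only: rightopts.simps size_R)

function le :: "game \<Rightarrow> game \<Rightarrow> bool" where
  "le (Game GL GR) (Game HL HR) =
     ((\<forall>x\<in>set GL. \<not> le (Game HL HR) x) \<and> (\<forall>y\<in>set HR. \<not> le y (Game GL GR)))"
  by pat_completeness auto
termination
  by (relation "measure (\<lambda>(g, h). size g + size h)") (auto dest: size_L size_R)

lemma le_def': "le G H \<longleftrightarrow>
   ((\<forall>x\<in>set (leftopts G). \<not> le H x) \<and> (\<forall>y\<in>set (rightopts H). \<not> le y G))"
  by (cases G; cases H) simp

declare le.simps[simp del]

lemma leI: "(\<And>x. x\<in>set (leftopts G) \<Longrightarrow> \<not> le H x) \<Longrightarrow> (\<And>y. y\<in>set (rightopts H) \<Longrightarrow> \<not> le y G) \<Longrightarrow> le G H"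
  using le_def'[of G H] by blast

lemma nle_L: "z \<in> set (leftopts A) \<Longrightarrow> le B z \<Longrightarrow> \<not> le A B"
  using le_def'[of A B] by blast
lemma nle_R: "w \<in> set (rightopts B) \<Longrightarrow> le w A \<Longrightarrow> \<not> le A B"
  using le_def'[of A B] by blast
lemma nle_E: "\<not> le A B \<Longrightarrow> (\<exists>z\<in>set (leftopts A). le B z) \<or> (\<exists>w\<in>set (rightopts B). le w A)"
  using le_def'[of A B] by blast
lemma le_L: "le G H \<Longrightarrow> x \<in> set (leftopts G) \<Longrightarrow> \<not> le H x"
  using le_def'[of G H] by blast
lemma le_R: "le G H \<Longrightarrow> y \<in> set (rightopts H) \<Longrightarrow> \<not> le y G"
  using le_def'[of G H] by blast

lemma le_refl: "le G G"
proof (induction "size G" arbitrary: G rule: less_induct)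
  case less
  show ?case
  proof (rule leI)
    fix x assume x: "x \<in> set (leftopts G)"
    then have "le x x" using less size_leftopts by blast
    then show "\<not> le G x" using nle_L[OF x] by blast
  next
    fix y assume y: "y \<in> set (rightopts G)"
    then have "le y y" using less size_rightopts by blast
    then show "\<not> le y G" using nle_R[OF y] by blast
  qed
qed

lemma le_trans_aux: "size G + size H + size K = n \<Longrightarrow> le G H \<Longrightarrow> le H K \<Longrightarrow> le G K"
proof (induction n arbitrary: G H K rule: less_induct)
  case (less n)
  show ?case
  proof (rule leI)
    fix x assume x: "x \<in> set (leftopts G)"
    show "\<not> le K x"
    proof
      assume "le K x"
      have "size H + size K + size x < n" using less.prems(1) size_leftopts[OF x] by simp
      then have "le H x" using less.IH \<open>le K x\<close> less.prems(3) by blast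
      then show False using le_L[OF less.prems(2) x] by blast
    qed
  next
    fix y assume y: "y \<in> set (rightopts K)"
    show "\<not> le y G"
    proof
      assume "le y G"
      have "size y + size G + size H < n" using less.prems(1) size_rightopts[OF y] by simp
      then have "le y H" using less.IH \<open>le y G\<close> less.prems(2) by blast
      then show False using le_R[OF less.prems(3) y] by blast
    qed
  qed
qed

lemma le_trans: "le G H \<Longrightarrow> le H K \<Longrightarrow> le G K"
  using le_trans_aux by blast

definition eqv :: "game \<Rightarrow> game \<Rightarrow> bool" where
  "eqv G H \<longleftrightarrow> le G H \<and> le H G"

lemma eqv_refl: "eqv G G" by (simp add: eqv_def le_refl)
lemma eqv_sym: "eqv G H \<Longrightarrow> eqv H G" by (simp add: eqv_def)
lemma eqv_trans: "eqv G H \<Longrightarrow> eqv H K \<Longrightarrow> eqv G K" by (meson eqv_def le_trans)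
lemma eqv_le1: "eqv G H \<Longrightarrow> le G H" by (simp add: eqv_def)
lemma eqv_le2: "eqv G H \<Longrightarrow> le H G" by (simp add: eqv_def)

lemma eqv_intro:
  assumes "\<And>x. x \<in> set (leftopts G) \<Longrightarrow> \<exists>y\<in>set (leftopts H). eqv x y"
      and "\<And>y. y \<in> set (leftopts H) \<Longrightarrow> \<exists>x\<in>set (leftopts G). eqv x y"
      and "\<And>x. x \<in> set (rightopts G) \<Longrightarrow> \<exists>y\<in>set (rightopts H). eqv x y"
      and "\<And>y. y \<in> set (rightopts H) \<Longrightarrow> \<exists>x\<in>set (rightopts G). eqv x y"
  shows "eqv G H"
  unfolding eqv_def
proof
  show "le G H"
  proof (rule leI)
    fix x assume x: "x \<in> set (leftopts G)"
    then obtain y where "y\<in>set (leftopts H)" "eqv x y" using assms(1) by blast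
    then show "\<not> le H x" using nle_L eqv_le1 by blast
  next
    fix y assume y: "y \<in> set (rightopts H)"
    then obtain x where "x\<in>set (rightopts G)" "eqv x y" using assms(4) by blast
    then show "\<not> le y G" using nle_R eqv_le1 by blast
  qed
next
  show "le H G"
  proof (rule leI)
    fix y assume y: "y \<in> set (leftopts H)"
    then obtain x where "x\<in>set (leftopts G)" "eqv x y" using assms(2) by blast
    then show "\<not> le G y" using nle_L eqv_le2 by blast
  next
    fix x assume x: "x \<in> set (rightopts G)"
    then obtain y where "y\<in>set (rightopts H)" "eqv x y" using assms(3) by blast
    then show "\<not> le x H" using nle_R eqv_le2 by blast
  qed
qed

lemma outcome_le:
  "(\<not> lwins_first G \<longleftrightarrow> le G gzero) \<and> (\<not> rwins_first G \<longleftrightarrow> le gzero G)"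
proof (induction G)
  case (Game L R)
  have "le (Game L R) gzero \<longleftrightarrow> (\<forall>x\<in>set L. \<not> le gzero x)"
    using le_def'[of "Game L R" gzero] by (simp add: gzero_def)
  moreover have "le gzero (Game L R) \<longleftrightarrow> (\<forall>x\<in>set R. \<not> le x gzero)"
    using le_def'[of gzero "Game L R"] by (simp add: gzero_def)
  ultimately show ?case using Game by auto
qed

lemma leftopts_plus: "leftopts (gplus G H) = map (\<lambda>x. gplus x H) (leftopts G) @ map (\<lambda>y. gplus G y) (leftopts H)"
  by (cases G; cases H) simp
lemma rightopts_plus: "rightopts (gplus G H) = map (\<lambda>x. gplus x H) (rightopts G) @ map (\<lambda>y. gplus G y) (rightopts H)"
  by (cases G; cases H) simp
lemma leftopts_neg: "leftopts (gneg G) = map gneg (rightopts G)"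
  by (cases G) simp
lemma rightopts_neg: "rightopts (gneg G) = map gneg (leftopts G)"
  by (cases G) simp

lemma mem_L_plus: "x \<in> set (leftopts (gplus G H)) \<longleftrightarrow> (\<exists>g\<in>set (leftopts G). x = gplus g H) \<or> (\<exists>h\<in>set (leftopts H). x = gplus G h)"
  by (auto simp: leftopts_plus)
lemma mem_R_plus: "x \<in> set (rightopts (gplus G H)) \<longleftrightarrow> (\<exists>g\<in>set (rightopts G). x = gplus g H) \<or> (\<exists>h\<in>set (rightopts H). x = gplus G h)"
  by (auto simp: rightopts_plus)
lemma L_plus1: "g \<in> set (leftopts G) \<Longrightarrow> gplus g H \<in> set (leftopts (gplus G H))"
  by (auto simp: leftopts_plus)
lemma L_plus2: "h \<in> set (leftopts H) \<Longrightarrow> gplus G h \<in> set (leftopts (gplus G H))"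
  by (auto simp: leftopts_plus)
lemma R_plus1: "g \<in> set (rightopts G) \<Longrightarrow> gplus g H \<in> set (rightopts (gplus G H))"
  by (auto simp: rightopts_plus)
lemma R_plus2: "h \<in> set (rightopts H) \<Longrightarrow> gplus G h \<in> set (rightopts (gplus G H))"
  by (auto simp: rightopts_plus)

lemma mono1_aux: "size G + size H + size K = n \<Longrightarrow> le G H \<Longrightarrow> le (gplus G K) (gplus H K)"
proof (induction n arbitrary: G H K rule: less_induct)
  case (less n)
  note IH = less.IH[OF _ refl]
  show ?case
  proof (rule leI)
    fix x assume "x \<in> set (leftopts (gplus G K))"
    then consider (a) g where "g \<in> set (leftopts G)" "x = gplus g K"
      | (b) k where "k \<in> set (leftopts K)" "x = gplus G k" by (auto simp: mem_L_plus)
    then show "\<not> le (gplus H K) x"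
    proof cases
      case a
      have "\<not> le H g" using le_L[OF less.prems(2) a(1)] .
      then consider (c) z where "z \<in> set (leftopts H)" "le g z" | (d) w where "w \<in> set (rightopts g)" "le w H"
        using nle_E by blast
      then show ?thesis
      proof cases
        case c
        have "le (gplus g K) (gplus z K)"
          using IH[OF _ c(2)] size_leftopts[OF a(1)] size_leftopts[OF c(1)] less.prems(1) by simp
        then show ?thesis using nle_L[OF L_plus1[OF c(1)]] a(2) by blast
      next
        case d
        have "size w < size g" using size_rightopts[OF d(1)] .
        then have "le (gplus w K) (gplus H K)"
          using IH[OF _ d(2)] size_leftopts[OF a(1)] less.prems(1) by simp
        then show ?thesis using nle_R[OF R_plus1[OF d(1)]] a(2) by blast
      qed
    next
      case b
      have "le (gplus G k) (gplus H k)"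
        using IH[OF _ less.prems(2)] size_leftopts[OF b(1)] less.prems(1) by simp
      then show ?thesis using nle_L[OF L_plus2[OF b(1)]] b(2) by blast
    qed
  next
    fix y assume "y \<in> set (rightopts (gplus H K))"
    then consider (a) h where "h \<in> set (rightopts H)" "y = gplus h K"
      | (b) k where "k \<in> set (rightopts K)" "y = gplus H k" by (auto simp: mem_R_plus)
    then show "\<not> le y (gplus G K)"
    proof cases
      case a
      have "\<not> le h G" using le_R[OF less.prems(2) a(1)] .
      then consider (c) z where "z \<in> set (leftopts h)" "le G z" | (d) w where "w \<in> set (rightopts G)" "le w h"
        using nle_E by blast
      then show ?thesis
      proof cases
        case c
        have "size z < size h" using size_leftopts[OF c(1)] .
        then have "le (gplus G K) (gplus z K)"
          using IH[OF _ c(2)] size_rightopts[OF a(1)] less.prems(1) by simp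
        then show ?thesis using nle_L[OF L_plus1[OF c(1)]] a(2) by blast
      next
        case d
        have "le (gplus w K) (gplus h K)"
          using IH[OF _ d(2)] size_rightopts[OF a(1)] size_rightopts[OF d(1)] less.prems(1) by simp
        then show ?thesis using nle_R[OF R_plus1[OF d(1)]] a(2) by blast
      qed
    next
      case b
      have "le (gplus G k) (gplus H k)"
        using IH[OF _ less.prems(2)] size_rightopts[OF b(1)] less.prems(1) by simp
      then show ?thesis using nle_R[OF R_plus2[OF b(1)]] b(2) by blast
    qed
  qed
qed

lemma mono2_aux: "size G + size H + size K = n \<Longrightarrow> le G H \<Longrightarrow> le (gplus K G) (gplus K H)"
proof (induction n arbitrary: G H K rule: less_induct)
  case (less n)
  note IH = less.IH[OF _ refl]
  show ?case
  proof (rule leI)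
    fix x assume "x \<in> set (leftopts (gplus K G))"
    then consider (a) g where "g \<in> set (leftopts G)" "x = gplus K g"
      | (b) k where "k \<in> set (leftopts K)" "x = gplus k G" by (auto simp: mem_L_plus)
    then show "\<not> le (gplus K H) x"
    proof cases
      case a
      have "\<not> le H g" using le_L[OF less.prems(2) a(1)] .
      then consider (c) z where "z \<in> set (leftopts H)" "le g z" | (d) w where "w \<in> set (rightopts g)" "le w H"
        using nle_E by blast
      then show ?thesis
      proof cases
        case c
        have "le (gplus K g) (gplus K z)"
          using IH[OF _ c(2)] size_leftopts[OF a(1)] size_leftopts[OF c(1)] less.prems(1) by simp
        then show ?thesis using nle_L[OF L_plus2[OF c(1)]] a(2) by blast
      next
        case d
        have "size w < size g" using size_rightopts[OF d(1)] .
        then have "le (gplus K w) (gplus K H)"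
          using IH[OF _ d(2)] size_leftopts[OF a(1)] less.prems(1) by simp
        then show ?thesis using nle_R[OF R_plus2[OF d(1)]] a(2) by blast
      qed
    next
      case b
      have "le (gplus k G) (gplus k H)"
        using IH[OF _ less.prems(2)] size_leftopts[OF b(1)] less.prems(1) by simp
      then show ?thesis using nle_L[OF L_plus1[OF b(1)]] b(2) by blast
    qed
  next
    fix y assume "y \<in> set (rightopts (gplus K H))"
    then consider (a) h where "h \<in> set (rightopts H)" "y = gplus K h"
      | (b) k where "k \<in> set (rightopts K)" "y = gplus k H" by (auto simp: mem_R_plus)
    then show "\<not> le y (gplus K G)"
    proof cases
      case a
      have "\<not> le h G" using le_R[OF less.prems(2) a(1)] .
      then consider (c) z where "z \<in> set (leftopts h)" "le G z" | (d) w where "w \<in> set (rightopts G)" "le w h"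
        using nle_E by blast
      then show ?thesis
      proof cases
        case c
        have "size z < size h" using size_leftopts[OF c(1)] .
        then have "le (gplus K G) (gplus K z)"
          using IH[OF _ c(2)] size_rightopts[OF a(1)] less.prems(1) by simp
        then show ?thesis using nle_L[OF L_plus2[OF c(1)]] a(2) by blast
      next
        case d
        have "le (gplus K w) (gplus K h)"
          using IH[OF _ d(2)] size_rightopts[OF a(1)] size_rightopts[OF d(1)] less.prems(1) by simp
        then show ?thesis using nle_R[OF R_plus2[OF d(1)]] a(2) by blast
      qed
    next
      case b
      have "le (gplus k G) (gplus k H)"
        using IH[OF _ less.prems(2)] size_rightopts[OF b(1)] less.prems(1) by simp
      then show ?thesis using nle_R[OF R_plus1[OF b(1)]] b(2) by blast
    qed
  qed
qed

lemma mono1: "le G H \<Longrightarrow> le (gplus G K) (gplus H K)" using mono1_aux by blast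
lemma mono2: "le G H \<Longrightarrow> le (gplus K G) (gplus K H)" using mono2_aux by blast
lemma eqv_plus1: "eqv G H \<Longrightarrow> eqv (gplus G K) (gplus H K)" by (simp add: eqv_def mono1)
lemma eqv_plus2: "eqv G H \<Longrightarrow> eqv (gplus K G) (gplus K H)" by (simp add: eqv_def mono2)
lemma eqv_plus: "eqv G H \<Longrightarrow> eqv G' H' \<Longrightarrow> eqv (gplus G G') (gplus H H')"
  by (meson eqv_plus1 eqv_plus2 eqv_trans)

lemma gneg_gneg[simp]: "gneg (gneg G) = G"
  by (induction G) (simp add: map_idI)

lemma gneg_plus: "gneg (gplus G H) = gplus (gneg G) (gneg H)"
  by (induction G H rule: gplus.induct) simp

lemma plus_neg_aux: "le (gplus H (gneg H)) gzero \<and> le gzero (gplus H (gneg H))"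
proof (induction "size H" arbitrary: H rule: less_induct)
  case less
  show ?case
  proof
    show "le (gplus H (gneg H)) gzero"
    proof (rule leI)
      fix x assume "x \<in> set (leftopts (gplus H (gneg H)))"
      then consider (a) g where "g \<in> set (leftopts H)" "x = gplus g (gneg H)"
        | (b) k where "k \<in> set (rightopts H)" "x = gplus H (gneg k)"
        by (auto simp: mem_L_plus leftopts_neg)
      then show "\<not> le gzero x"
      proof cases
        case a
        have "gplus g (gneg g) \<in> set (rightopts x)" using a by (auto simp: mem_R_plus rightopts_neg)
        moreover have "le (gplus g (gneg g)) gzero" using less size_leftopts[OF a(1)] by blast
        ultimately show ?thesis using nle_R by blast
      next
        case b
        have "gplus k (gneg k) \<in> set (rightopts x)" using b by (auto simp: mem_R_plus rightopts_neg)
        moreover have "le (gplus k (gneg k)) gzero" using less size_rightopts[OF b(1)] by blast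
        ultimately show ?thesis using nle_R by blast
      qed
    next
      fix y assume "y \<in> set (rightopts gzero)" then show "\<not> le y (gplus H (gneg H))" by (simp add: gzero_def)
    qed
  next
    show "le gzero (gplus H (gneg H))"
    proof (rule leI)
      fix x assume "x \<in> set (leftopts gzero)" then show "\<not> le (gplus H (gneg H)) x" by (simp add: gzero_def)
    next
      fix y assume "y \<in> set (rightopts (gplus H (gneg H)))"
      then consider (a) g where "g \<in> set (rightopts H)" "y = gplus g (gneg H)"
        | (b) k where "k \<in> set (leftopts H)" "y = gplus H (gneg k)"
        by (auto simp: mem_R_plus rightopts_neg)
      then show "\<not> le y gzero"
      proof cases
        case a
        have "gplus g (gneg g) \<in> set (leftopts y)" using a by (auto simp: mem_L_plus leftopts_neg)
        moreover have "le gzero (gplus g (gneg g))" using less size_rightopts[OF a(1)] by blast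
        ultimately show ?thesis using nle_L by blast
      next
        case b
        have "gplus k (gneg k) \<in> set (leftopts y)" using b by (auto simp: mem_L_plus leftopts_neg)
        moreover have "le gzero (gplus k (gneg k))" using less size_leftopts[OF b(1)] by blast
        ultimately show ?thesis using nle_L by blast
      qed
    qed
  qed
qed

lemma plus_neg: "eqv (gplus H (gneg H)) gzero"
  using plus_neg_aux by (simp add: eqv_def)

lemma plus_zero: "eqv (gplus G gzero) G"
proof (induction "size G" arbitrary: G rule: less_induct)
  case less
  show ?case
  proof (rule eqv_intro)
    fix x assume "x \<in> set (leftopts (gplus G gzero))"
    then obtain g where g: "g \<in> set (leftopts G)" "x = gplus g gzero" by (auto simp: mem_L_plus gzero_def)
    then show "\<exists>y\<in>set (leftopts G). eqv x y" using less size_leftopts[OF g(1)] by blast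
  next
    fix y assume y: "y \<in> set (leftopts G)"
    then have "gplus y gzero \<in> set (leftopts (gplus G gzero))" by (rule L_plus1)
    then show "\<exists>x\<in>set (leftopts (gplus G gzero)). eqv x y" using less size_leftopts[OF y] by blast
  next
    fix x assume "x \<in> set (rightopts (gplus G gzero))"
    then obtain g where g: "g \<in> set (rightopts G)" "x = gplus g gzero" by (auto simp: mem_R_plus gzero_def)
    then show "\<exists>y\<in>set (rightopts G). eqv x y" using less size_rightopts[OF g(1)] by blast
  next
    fix y assume y: "y \<in> set (rightopts G)"
    then have "gplus y gzero \<in> set (rightopts (gplus G gzero))" by (rule R_plus1)
    then show "\<exists>x\<in>set (rightopts (gplus G gzero)). eqv x y" using less size_rightopts[OF y] by blast
  qed
qed

lemma zero_plus: "eqv (gplus gzero G) G"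
proof (induction "size G" arbitrary: G rule: less_induct)
  case less
  show ?case
  proof (rule eqv_intro)
    fix x assume "x \<in> set (leftopts (gplus gzero G))"
    then obtain g where g: "g \<in> set (leftopts G)" "x = gplus gzero g" by (auto simp: mem_L_plus gzero_def)
    then show "\<exists>y\<in>set (leftopts G). eqv x y" using less size_leftopts[OF g(1)] by blast
  next
    fix y assume y: "y \<in> set (leftopts G)"
    then have "gplus gzero y \<in> set (leftopts (gplus gzero G))" by (rule L_plus2)
    then show "\<exists>x\<in>set (leftopts (gplus gzero G)). eqv x y" using less size_leftopts[OF y] by blast
  next
    fix x assume "x \<in> set (rightopts (gplus gzero G))"
    then obtain g where g: "g \<in> set (rightopts G)" "x = gplus gzero g" by (auto simp: mem_R_plus gzero_def)
    then show "\<exists>y\<in>set (rightopts G). eqv x y" using less size_rightopts[OF g(1)] by blast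
  next
    fix y assume y: "y \<in> set (rightopts G)"
    then have "gplus gzero y \<in> set (rightopts (gplus gzero G))" by (rule R_plus2)
    then show "\<exists>x\<in>set (rightopts (gplus gzero G)). eqv x y" using less size_rightopts[OF y] by blast
  qed
qed

lemma assoc_aux: "size G + size H + size K = n \<Longrightarrow> eqv (gplus (gplus G H) K) (gplus G (gplus H K))"
proof (induction n arbitrary: G H K rule: less_induct)
  case (less n)
  note IH = less.IH[OF _ refl]
  show ?case
  proof (rule eqv_intro)
    fix x assume "x \<in> set (leftopts (gplus (gplus G H) K))"
    then consider (a) g where "g \<in> set (leftopts G)" "x = gplus (gplus g H) K"
      | (b) g where "g \<in> set (leftopts H)" "x = gplus (gplus G g) K"
      | (c) g where "g \<in> set (leftopts K)" "x = gplus (gplus G H) g"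
      by (auto simp: mem_L_plus)
    then show "\<exists>y\<in>set (leftopts (gplus G (gplus H K))). eqv x y"
    proof cases
      case a
      have "eqv x (gplus g (gplus H K))" using IH[of g H K] size_leftopts[OF a(1)] less.prems a(2) by simp
      then show ?thesis using L_plus1[OF a(1)] by blast
    next
      case b
      have "eqv x (gplus G (gplus g K))" using IH[of G g K] size_leftopts[OF b(1)] less.prems b(2) by simp
      then show ?thesis using L_plus2[OF L_plus1[OF b(1)]] by blast
    next
      case c
      have "eqv x (gplus G (gplus H g))" using IH[of G H g] size_leftopts[OF c(1)] less.prems c(2) by simp
      then show ?thesis using L_plus2[OF L_plus2[OF c(1)]] by blast
    qed
  next
    fix y assume "y \<in> set (leftopts (gplus G (gplus H K)))"
    then consider (a) g where "g \<in> set (leftopts G)" "y = gplus g (gplus H K)"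
      | (b) g where "g \<in> set (leftopts H)" "y = gplus G (gplus g K)"
      | (c) g where "g \<in> set (leftopts K)" "y = gplus G (gplus H g)"
      by (auto simp: mem_L_plus)
    then show "\<exists>x\<in>set (leftopts (gplus (gplus G H) K)). eqv x y"
    proof cases
      case a
      have "eqv (gplus (gplus g H) K) y" using IH[of g H K] size_leftopts[OF a(1)] less.prems a(2) by simp
      then show ?thesis using L_plus1[OF L_plus1[OF a(1)]] by blast
    next
      case b
      have "eqv (gplus (gplus G g) K) y" using IH[of G g K] size_leftopts[OF b(1)] less.prems b(2) by simp
      then show ?thesis using L_plus1[OF L_plus2[OF b(1)]] by blast
    next
      case c
      have "eqv (gplus (gplus G H) g) y" using IH[of G H g] size_leftopts[OF c(1)] less.prems c(2) by simp
      then show ?thesis using L_plus2[OF c(1)] by blast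
    qed
  next
    fix x assume "x \<in> set (rightopts (gplus (gplus G H) K))"
    then consider (a) g where "g \<in> set (rightopts G)" "x = gplus (gplus g H) K"
      | (b) g where "g \<in> set (rightopts H)" "x = gplus (gplus G g) K"
      | (c) g where "g \<in> set (rightopts K)" "x = gplus (gplus G H) g"
      by (auto simp: mem_R_plus)
    then show "\<exists>y\<in>set (rightopts (gplus G (gplus H K))). eqv x y"
    proof cases
      case a
      have "eqv x (gplus g (gplus H K))" using IH[of g H K] size_rightopts[OF a(1)] less.prems a(2) by simp
      then show ?thesis using R_plus1[OF a(1)] by blast
    next
      case b
      have "eqv x (gplus G (gplus g K))" using IH[of G g K] size_rightopts[OF b(1)] less.prems b(2) by simp
      then show ?thesis using R_plus2[OF R_plus1[OF b(1)]] by blast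
    next
      case c
      have "eqv x (gplus G (gplus H g))" using IH[of G H g] size_rightopts[OF c(1)] less.prems c(2) by simp
      then show ?thesis using R_plus2[OF R_plus2[OF c(1)]] by blast
    qed
  next
    fix y assume "y \<in> set (rightopts (gplus G (gplus H K)))"
    then consider (a) g where "g \<in> set (rightopts G)" "y = gplus g (gplus H K)"
      | (b) g where "g \<in> set (rightopts H)" "y = gplus G (gplus g K)"
      | (c) g where "g \<in> set (rightopts K)" "y = gplus G (gplus H g)"
      by (auto simp: mem_R_plus)
    then show "\<exists>x\<in>set (rightopts (gplus (gplus G H) K)). eqv x y"
    proof cases
      case a
      have "eqv (gplus (gplus g H) K) y" using IH[of g H K] size_rightopts[OF a(1)] less.prems a(2) by simp
      then show ?thesis using R_plus1[OF R_plus1[OF a(1)]] by blast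
    next
      case b
      have "eqv (gplus (gplus G g) K) y" using IH[of G g K] size_rightopts[OF b(1)] less.prems b(2) by simp
      then show ?thesis using R_plus1[OF R_plus2[OF b(1)]] by blast
    next
      case c
      have "eqv (gplus (gplus G H) g) y" using IH[of G H g] size_rightopts[OF c(1)] less.prems c(2) by simp
      then show ?thesis using R_plus2[OF c(1)] by blast
    qed
  qed
qed

lemma assoc: "eqv (gplus (gplus G H) K) (gplus G (gplus H K))"
  using assoc_aux by blast

lemma eqv_game_eq: "eqv G H \<Longrightarrow> G =\<^sub>g H"
proof -
  assume "eqv G H"
  then have "eqv (gplus G (gneg H)) (gplus H (gneg H))" by (rule eqv_plus1)
  then have e: "eqv (gplus G (gneg H)) gzero" using plus_neg eqv_trans by blast
  then show ?thesis using outcome_le[of "gplus G (gneg H)"]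
    by (simp add: game_eq_def second_player_win_def eqv_def)
qed

lemma spw_eqv: "eqv X Y \<Longrightarrow> \<not> lwins_first Y \<Longrightarrow> \<not> rwins_first Y \<Longrightarrow> second_player_win X"
proof -
  assume e: "eqv X Y" and l: "\<not> lwins_first Y" and r: "\<not> rwins_first Y"
  have "le Y gzero" "le gzero Y" using outcome_le[of Y] l r by auto
  moreover have "le X Y" "le Y X" using e by (auto simp: eqv_def)
  ultimately have "le X gzero" "le gzero X" using le_trans by blast+
  then show ?thesis using outcome_le[of X] by (simp add: second_player_win_def)
qed

lemma gneg_star: "gneg gstar = gstar" by (simp add: gstar_def gzero_def)
lemma star_star: "eqv (gplus gstar gstar) gzero"
  using plus_neg[of gstar] by (simp add: gneg_star)

function SX :: "nat \<Rightarrow> nat \<Rightarrow> nat \<Rightarrow> game" where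
  "SX a b c = (if a + b + c = 0 then Game [] [] else
     Game (gzero # (if 0 < a then [SX (a-1) b c] else []) @ (if 0 < c then [SX a b (c-1)] else []))
          ((if 0 < b then [SX a (b-1) c] else []) @ (if 0 < c then [SX a b (c-1)] else [])))"
  by pat_completeness auto
termination by (relation "measure (\<lambda>(a,b,c). a + b + c)") auto

declare SX.simps[simp del]

lemma SX_L: "x \<in> set (leftopts (SX a b c)) \<longleftrightarrow> 0 < a + b + c \<and>
   (x = gzero \<or> (0 < a \<and> x = SX (a-1) b c) \<or> (0 < c \<and> x = SX a b (c-1)))"
  by (simp only: SX.simps[of a b c]) auto
lemma SX_R: "x \<in> set (rightopts (SX a b c)) \<longleftrightarrow> 0 < a + b + c \<and>
   ((0 < b \<and> x = SX a (b-1) c) \<or> (0 < c \<and> x = SX a b (c-1)))"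
  by (simp only: SX.simps[of a b c]) auto
lemma SX_000: "SX 0 0 0 = gzero"
  by (simp add: SX.simps gzero_def)

function M :: "nat \<Rightarrow> nat \<Rightarrow> nat \<Rightarrow> game" where
  "M p i j = Game
     ((if 0 < p then [M 0 i j] else []) @ (if 0 < i then [M p (i-1) (Suc j)] else []) @ (if 0 < j then [M p i (j-1)] else []))
     ((if 0 < p then [M (p-1) i j] else []) @ (if 0 < i then [M p (i-1) j] else []) @ (if 0 < j then [M p i (j-1)] else []))"
  by pat_completeness auto
termination by (relation "measure (\<lambda>(p,i,j). p + 2 * i + j)") auto

declare M.simps[simp del]

lemma M_L: "x \<in> set (leftopts (M p i j)) \<longleftrightarrow>
   (0 < p \<and> x = M 0 i j) \<or> (0 < i \<and> x = M p (i-1) (Suc j)) \<or> (0 < j \<and> x = M p i (j-1))"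
  by (simp only: M.simps[of p i j]) auto
lemma M_R: "x \<in> set (rightopts (M p i j)) \<longleftrightarrow>
   (0 < p \<and> x = M (p-1) i j) \<or> (0 < i \<and> x = M p (i-1) j) \<or> (0 < j \<and> x = M p i (j-1))"
  by (simp only: M.simps[of p i j]) auto
lemma M_000: "M 0 0 0 = gzero"
  by (simp add: M.simps gzero_def)
lemma M_001: "M 0 0 (Suc 0) = gstar"
  by (subst M.simps) (simp add: M_000 gstar_def)
lemma M_010: "M 0 (Suc 0) 0 = gneg gup"
  by (subst M.simps) (simp add: M_000 M_001 gup_def gstar_def gzero_def)
lemma M_100: "M (Suc 0) 0 0 = gstar"
  by (subst M.simps) (simp add: M_000 gstar_def)

lemma lw_def': "lwins_first G \<longleftrightarrow> (\<exists>x\<in>set (leftopts G). \<not> rwins_first x)"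
  by (cases G) simp
lemma rw_def': "rwins_first G \<longleftrightarrow> (\<exists>x\<in>set (rightopts G). \<not> lwins_first x)"
  by (cases G) simp

definition xval :: "nat \<Rightarrow> nat \<Rightarrow> int" where
  "xval p i = (if p = 0 then 0 else int p - 1) - int i"
definition LW :: "nat \<Rightarrow> nat \<Rightarrow> nat \<Rightarrow> bool" where
  "LW p i j \<longleftrightarrow> xval p i \<ge> 1 \<or> (odd (p + j) \<and> xval p i \<ge> -1)"
definition RW :: "nat \<Rightarrow> nat \<Rightarrow> nat \<Rightarrow> bool" where
  "RW p i j \<longleftrightarrow> xval p i \<le> -1 \<or> (odd (p + j) \<and> xval p i \<le> 1)"

lemma LW_rec: "LW p i j \<longleftrightarrow> (0 < p \<and> \<not> RW 0 i j) \<or> (0 < i \<and> \<not> RW p (i-1) (Suc j)) \<or> (0 < j \<and> \<not> RW p i (j-1))"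
  unfolding LW_def RW_def xval_def
  by (cases "p = 0"; cases "i = 0"; cases "j = 0"; simp; presburger)
lemma RW_rec: "RW p i j \<longleftrightarrow> (0 < p \<and> \<not> LW (p-1) i j) \<or> (0 < i \<and> \<not> LW p (i-1) j) \<or> (0 < j \<and> \<not> LW p i (j-1))"
  unfolding LW_def RW_def xval_def
  by (cases "p = 0"; cases "p = 1"; cases "i = 0"; cases "j = 0"; simp; presburger)

lemma M_outcome_aux: "p + 2 * i + j = n \<Longrightarrow> (lwins_first (M p i j) \<longleftrightarrow> LW p i j) \<and> (rwins_first (M p i j) \<longleftrightarrow> RW p i j)"
proof (induction n arbitrary: p i j rule: less_induct)
  case (less n)
  have IH: "\<And>p' i' j'. p' + 2 * i' + j' < p + 2 * i + j \<Longrightarrow>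
     (lwins_first (M p' i' j') \<longleftrightarrow> LW p' i' j') \<and> (rwins_first (M p' i' j') \<longleftrightarrow> RW p' i' j')"
    using less by blast
  have l: "lwins_first (M p i j) \<longleftrightarrow> (0 < p \<and> \<not> rwins_first (M 0 i j)) \<or> (0 < i \<and> \<not> rwins_first (M p (i-1) (Suc j)))
       \<or> (0 < j \<and> \<not> rwins_first (M p i (j-1)))"
    unfolding lw_def'[of "M p i j"] Bex_def M_L by blast
  have r: "rwins_first (M p i j) \<longleftrightarrow> (0 < p \<and> \<not> lwins_first (M (p-1) i j)) \<or> (0 < i \<and> \<not> lwins_first (M p (i-1) j))
       \<or> (0 < j \<and> \<not> lwins_first (M p i (j-1)))"
    unfolding rw_def'[of "M p i j"] Bex_def M_R by blast
  have l2: "lwins_first (M p i j) \<longleftrightarrow> (0 < p \<and> \<not> RW 0 i j) \<or> (0 < i \<and> \<not> RW p (i-1) (Suc j))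
       \<or> (0 < j \<and> \<not> RW p i (j-1))"
  proof -
    have h1: "0 < p \<Longrightarrow> (rwins_first (M 0 i j) \<longleftrightarrow> RW 0 i j)" using IH[of 0 i j] by simp
    have h2: "0 < i \<Longrightarrow> (rwins_first (M p (i-1) (Suc j)) \<longleftrightarrow> RW p (i-1) (Suc j))"
      using IH[of p "i-1" "Suc j"] by simp
    have h3: "0 < j \<Longrightarrow> (rwins_first (M p i (j-1)) \<longleftrightarrow> RW p i (j-1))" using IH[of p i "j-1"] by simp
    show ?thesis unfolding l using h1 h2 h3 by blast
  qed
  have r2: "rwins_first (M p i j) \<longleftrightarrow> (0 < p \<and> \<not> LW (p-1) i j) \<or> (0 < i \<and> \<not> LW p (i-1) j)
       \<or> (0 < j \<and> \<not> LW p i (j-1))"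
  proof -
    have h1: "0 < p \<Longrightarrow> (lwins_first (M (p-1) i j) \<longleftrightarrow> LW (p-1) i j)" using IH[of "p-1" i j] by simp
    have h2: "0 < i \<Longrightarrow> (lwins_first (M p (i-1) j) \<longleftrightarrow> LW p (i-1) j)"
      using IH[of p "i-1" j] by simp
    have h3: "0 < j \<Longrightarrow> (lwins_first (M p i (j-1)) \<longleftrightarrow> LW p i (j-1))" using IH[of p i "j-1"] by simp
    show ?thesis unfolding r using h1 h2 h3 by blast
  qed
  have "LW p i j \<longleftrightarrow> (0 < p \<and> \<not> RW 0 i j) \<or> (0 < i \<and> \<not> RW p (i-1) (Suc j)) \<or> (0 < j \<and> \<not> RW p i (j-1))"
    by (rule LW_rec)
  moreover have "RW p i j \<longleftrightarrow> (0 < p \<and> \<not> LW (p-1) i j) \<or> (0 < i \<and> \<not> LW p (i-1) j) \<or> (0 < j \<and> \<not> LW p i (j-1))"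
    by (rule RW_rec)
  ultimately show ?case using l2 r2 by blast
qed

lemma M_spw: "second_player_win (M p i j) \<longleftrightarrow> \<not> LW p i j \<and> \<not> RW p i j"
  using M_outcome_aux[OF refl, of p i j] by (simp add: second_player_win_def)

lemma Madd_aux: "p + 2 * (i + k) + j + l = n \<Longrightarrow> eqv (gplus (M p i j) (M 0 k l)) (M p (i + k) (j + l))"
proof (induction n arbitrary: p i j k l rule: less_induct)
  case (less n)
  have IH: "\<And>p' i' j' k' l'. p' + 2 * (i' + k') + j' + l' < p + 2 * (i + k) + j + l \<Longrightarrow>
      eqv (gplus (M p' i' j') (M 0 k' l')) (M p' (i' + k') (j' + l'))"
    using less by blast
  show ?case
  proof (rule eqv_intro)
    fix x assume "x \<in> set (leftopts (gplus (M p i j) (M 0 k l)))"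
    then consider (a) "0 < p" "x = gplus (M 0 i j) (M 0 k l)"
      | (b) "0 < i" "x = gplus (M p (i-1) (Suc j)) (M 0 k l)"
      | (c) "0 < j" "x = gplus (M p i (j-1)) (M 0 k l)"
      | (d) "0 < k" "x = gplus (M p i j) (M 0 (k-1) (Suc l))"
      | (e) "0 < l" "x = gplus (M p i j) (M 0 k (l-1))"
      unfolding mem_L_plus Bex_def M_L by auto
    then show "\<exists>y\<in>set (leftopts (M p (i + k) (j + l))). eqv x y"
    proof cases
      case a
      have "eqv x (M 0 (i + k) (j + l))" using IH[of 0 i k j l] a by simp
      moreover have "M 0 (i + k) (j + l) \<in> set (leftopts (M p (i + k) (j + l)))" using a by (simp add: M_L)
      ultimately show ?thesis by blast
    next
      case b
      have "eqv x (M p (i - 1 + k) (Suc j + l))" using IH[of p "i-1" k "Suc j" l] b by simp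
      moreover have "i - 1 + k = i + k - 1" "Suc j + l = Suc (j + l)" using b by arith+
      moreover have "M p (i + k - 1) (Suc (j + l)) \<in> set (leftopts (M p (i + k) (j + l)))" using b by (simp add: M_L)
      ultimately show ?thesis by auto
    next
      case c
      have "eqv x (M p (i + k) (j - 1 + l))" using IH[of p i k "j-1" l] c by simp
      moreover have "j - 1 + l = j + l - 1" using c by arith
      moreover have "M p (i + k) (j + l - 1) \<in> set (leftopts (M p (i + k) (j + l)))" using c by (simp add: M_L)
      ultimately show ?thesis by auto
    next
      case d
      have "eqv x (M p (i + (k - 1)) (j + Suc l))" using IH[of p i "k-1" j "Suc l"] d by simp
      moreover have "i + (k - 1) = i + k - 1" "j + Suc l = Suc (j + l)" using d by arith+
      moreover have "M p (i + k - 1) (Suc (j + l)) \<in> set (leftopts (M p (i + k) (j + l)))" using d by (simp add: M_L)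
      ultimately show ?thesis by auto
    next
      case e
      have "eqv x (M p (i + k) (j + (l - 1)))" using IH[of p i k j "l-1"] e by simp
      moreover have "j + (l - 1) = j + l - 1" using e by arith
      moreover have "M p (i + k) (j + l - 1) \<in> set (leftopts (M p (i + k) (j + l)))" using e by (simp add: M_L)
      ultimately show ?thesis by auto
    qed
  next
    fix y assume "y \<in> set (leftopts (M p (i + k) (j + l)))"
    then consider (a) "0 < p" "y = M 0 (i + k) (j + l)"
      | (b) "0 < i" "y = M p (i + k - 1) (Suc (j + l))"
      | (c) "0 < j" "y = M p (i + k) (j + l - 1)"
      | (d) "0 < k" "y = M p (i + k - 1) (Suc (j + l))"
      | (e) "0 < l" "y = M p (i + k) (j + l - 1)"
      unfolding M_L by auto
    then show "\<exists>x\<in>set (leftopts (gplus (M p i j) (M 0 k l))). eqv x y"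
    proof cases
      case a
      have "eqv (gplus (M 0 i j) (M 0 k l)) y" using IH[of 0 i k j l] a by simp
      moreover have "gplus (M 0 i j) (M 0 k l) \<in> set (leftopts (gplus (M p i j) (M 0 k l)))"
        using a by (intro L_plus1) (simp add: M_L)
      ultimately show ?thesis by blast
    next
      case b
      have "eqv (gplus (M p (i-1) (Suc j)) (M 0 k l)) (M p (i - 1 + k) (Suc j + l))" using IH[of p "i-1" k "Suc j" l] b by simp
      moreover have "i - 1 + k = i + k - 1" "Suc j + l = Suc (j + l)" using b by arith+
      moreover have "gplus (M p (i-1) (Suc j)) (M 0 k l) \<in> set (leftopts (gplus (M p i j) (M 0 k l)))"
        using b by (intro L_plus1) (simp add: M_L)
      ultimately show ?thesis using b by auto
    next
      case c
      have "eqv (gplus (M p i (j-1)) (M 0 k l)) (M p (i + k) (j - 1 + l))" using IH[of p i k "j-1" l] c by simp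
      moreover have "j - 1 + l = j + l - 1" using c by arith
      moreover have "gplus (M p i (j-1)) (M 0 k l) \<in> set (leftopts (gplus (M p i j) (M 0 k l)))"
        using c by (intro L_plus1) (simp add: M_L)
      ultimately show ?thesis using c by auto
    next
      case d
      have "eqv (gplus (M p i j) (M 0 (k-1) (Suc l))) (M p (i + (k - 1)) (j + Suc l))" using IH[of p i "k-1" j "Suc l"] d by simp
      moreover have "i + (k - 1) = i + k - 1" "j + Suc l = Suc (j + l)" using d by arith+
      moreover have "gplus (M p i j) (M 0 (k-1) (Suc l)) \<in> set (leftopts (gplus (M p i j) (M 0 k l)))"
        using d by (intro L_plus2) (simp add: M_L)
      ultimately show ?thesis using d by auto
    next
      case e
      have "eqv (gplus (M p i j) (M 0 k (l-1))) (M p (i + k) (j + (l - 1)))" using IH[of p i k j "l-1"] e by simp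
      moreover have "j + (l - 1) = j + l - 1" using e by arith
      moreover have "gplus (M p i j) (M 0 k (l-1)) \<in> set (leftopts (gplus (M p i j) (M 0 k l)))"
        using e by (intro L_plus2) (simp add: M_L)
      ultimately show ?thesis using e by auto
    qed
  next
    fix x assume "x \<in> set (rightopts (gplus (M p i j) (M 0 k l)))"
    then consider (a) "0 < p" "x = gplus (M (p-1) i j) (M 0 k l)"
      | (b) "0 < i" "x = gplus (M p (i-1) j) (M 0 k l)"
      | (c) "0 < j" "x = gplus (M p i (j-1)) (M 0 k l)"
      | (d) "0 < k" "x = gplus (M p i j) (M 0 (k-1) l)"
      | (e) "0 < l" "x = gplus (M p i j) (M 0 k (l-1))"
      unfolding mem_R_plus Bex_def M_R by auto
    then show "\<exists>y\<in>set (rightopts (M p (i + k) (j + l))). eqv x y"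
    proof cases
      case a
      have "eqv x (M (p-1) (i + k) (j + l))" using IH[of "p-1" i k j l] a by simp
      moreover have "M (p-1) (i + k) (j + l) \<in> set (rightopts (M p (i + k) (j + l)))" using a by (simp add: M_R)
      ultimately show ?thesis by blast
    next
      case b
      have "eqv x (M p (i - 1 + k) (j + l))" using IH[of p "i-1" k j l] b by simp
      moreover have "i - 1 + k = i + k - 1" using b by arith
      moreover have "M p (i + k - 1) (j + l) \<in> set (rightopts (M p (i + k) (j + l)))" using b by (simp add: M_R)
      ultimately show ?thesis by auto
    next
      case c
      have "eqv x (M p (i + k) (j - 1 + l))" using IH[of p i k "j-1" l] c by simp
      moreover have "j - 1 + l = j + l - 1" using c by arith
      moreover have "M p (i + k) (j + l - 1) \<in> set (rightopts (M p (i + k) (j + l)))" using c by (simp add: M_R)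
      ultimately show ?thesis by auto
    next
      case d
      have "eqv x (M p (i + (k - 1)) (j + l))" using IH[of p i "k-1" j l] d by simp
      moreover have "i + (k - 1) = i + k - 1" using d by arith
      moreover have "M p (i + k - 1) (j + l) \<in> set (rightopts (M p (i + k) (j + l)))" using d by (simp add: M_R)
      ultimately show ?thesis by auto
    next
      case e
      have "eqv x (M p (i + k) (j + (l - 1)))" using IH[of p i k j "l-1"] e by simp
      moreover have "j + (l - 1) = j + l - 1" using e by arith
      moreover have "M p (i + k) (j + l - 1) \<in> set (rightopts (M p (i + k) (j + l)))" using e by (simp add: M_R)
      ultimately show ?thesis by auto
    qed
  next
    fix y assume "y \<in> set (rightopts (M p (i + k) (j + l)))"
    then consider (a) "0 < p" "y = M (p-1) (i + k) (j + l)"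
      | (b) "0 < i" "y = M p (i + k - 1) (j + l)"
      | (c) "0 < j" "y = M p (i + k) (j + l - 1)"
      | (d) "0 < k" "y = M p (i + k - 1) (j + l)"
      | (e) "0 < l" "y = M p (i + k) (j + l - 1)"
      unfolding M_R by auto
    then show "\<exists>x\<in>set (rightopts (gplus (M p i j) (M 0 k l))). eqv x y"
    proof cases
      case a
      have "eqv (gplus (M (p-1) i j) (M 0 k l)) y" using IH[of "p-1" i k j l] a by simp
      moreover have "gplus (M (p-1) i j) (M 0 k l) \<in> set (rightopts (gplus (M p i j) (M 0 k l)))"
        using a by (intro R_plus1) (simp add: M_R)
      ultimately show ?thesis by blast
    next
      case b
      have "eqv (gplus (M p (i-1) j) (M 0 k l)) (M p (i - 1 + k) (j + l))" using IH[of p "i-1" k j l] b by simp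
      moreover have "i - 1 + k = i + k - 1" using b by arith
      moreover have "gplus (M p (i-1) j) (M 0 k l) \<in> set (rightopts (gplus (M p i j) (M 0 k l)))"
        using b by (intro R_plus1) (simp add: M_R)
      ultimately show ?thesis using b by auto
    next
      case c
      have "eqv (gplus (M p i (j-1)) (M 0 k l)) (M p (i + k) (j - 1 + l))" using IH[of p i k "j-1" l] c by simp
      moreover have "j - 1 + l = j + l - 1" using c by arith
      moreover have "gplus (M p i (j-1)) (M 0 k l) \<in> set (rightopts (gplus (M p i j) (M 0 k l)))"
        using c by (intro R_plus1) (simp add: M_R)
      ultimately show ?thesis using c by auto
    next
      case d
      have "eqv (gplus (M p i j) (M 0 (k-1) l)) (M p (i + (k - 1)) (j + l))" using IH[of p i "k-1" j l] d by simp
      moreover have "i + (k - 1) = i + k - 1" using d by arith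
      moreover have "gplus (M p i j) (M 0 (k-1) l) \<in> set (rightopts (gplus (M p i j) (M 0 k l)))"
        using d by (intro R_plus2) (simp add: M_R)
      ultimately show ?thesis using d by auto
    next
      case e
      have "eqv (gplus (M p i j) (M 0 k (l-1))) (M p (i + k) (j + (l - 1)))" using IH[of p i k j "l-1"] e by simp
      moreover have "j + (l - 1) = j + l - 1" using e by arith
      moreover have "gplus (M p i j) (M 0 k (l-1)) \<in> set (rightopts (gplus (M p i j) (M 0 k l)))"
        using e by (intro R_plus2) (simp add: M_R)
      ultimately show ?thesis using e by auto
    qed
  qed
qed

lemma Madd: "eqv (gplus (M p i j) (M 0 k l)) (M p (i + k) (j + l))"
  using Madd_aux by blast

lemma M0_L: "0 < p \<Longrightarrow> M 0 0 0 \<in> set (leftopts (M p 0 0))" by (simp add: M_L)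
lemma M0_R: "0 < p \<Longrightarrow> M (p - 1) 0 0 \<in> set (rightopts (M p 0 0))" by (simp add: M_R)

lemma M_R2: "le (M m 0 0) (M (Suc (Suc m)) 0 0)"
proof (induction m rule: less_induct)
  case (less m)
  show ?case
  proof (rule leI)
    fix x assume "x \<in> set (leftopts (M m 0 0))"
    then have "x = M 0 0 0" by (simp add: M_L)
    then show "\<not> le (M (Suc (Suc m)) 0 0) x" using nle_L[OF M0_L[of "Suc (Suc m)"]] le_refl by auto
  next
    fix y assume "y \<in> set (rightopts (M (Suc (Suc m)) 0 0))"
    then have y: "y = M (Suc m) 0 0" by (simp add: M_R)
    show "\<not> le y (M m 0 0)"
    proof (cases m)
      case 0
      then show ?thesis using y nle_L[OF M0_L[of "Suc 0"]] le_refl by auto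
    next
      case (Suc m')
      have "le (M m' 0 0) (M (Suc (Suc m')) 0 0)" using less Suc by simp
      then show ?thesis using y Suc nle_R[OF M0_R[of m]] by auto
    qed
  qed
qed

lemma nle_M: "0 < n \<Longrightarrow> \<not> le (M n 0 0) (M (n - 1) 0 0)"
proof (cases "n = 1")
  case True
  then show ?thesis using nle_L[OF M0_L[of 1]] le_refl by auto
next
  case False
  assume "0 < n"
  then obtain m where m: "n = Suc (Suc m)" using False by (metis One_nat_def gr0_implies_Suc not0_implies_Suc)
  have "M m 0 0 \<in> set (rightopts (M (n - 1) 0 0))" using m by (simp add: M_R)
  then show ?thesis using nle_R M_R2[of m] m by blast
qed

lemma SX0_aux: "b + c = n \<Longrightarrow> eqv (SX 0 b c) (M n 0 0)"
proof (induction n arbitrary: b c rule: less_induct)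
  case (less n)
  show ?case
  proof (cases "n = 0")
    case True
    then show ?thesis using less.prems by (simp add: SX_000 M_000 eqv_refl)
  next
    case False
    then have n0: "0 < n" by simp
    have IH1: "0 < b \<Longrightarrow> eqv (SX 0 (b - 1) c) (M (n - 1) 0 0)" using less n0 by simp
    have IH2: "0 < c \<Longrightarrow> eqv (SX 0 b (c - 1)) (M (n - 1) 0 0)" using less n0 by simp
    have g0: "gzero \<in> set (leftopts (SX 0 b c))" using n0 less.prems by (simp add: SX_L)
    have m0: "gzero \<in> set (leftopts (M n 0 0))" using M0_L[OF n0] by (simp add: M_000)
    have "le (SX 0 b c) (M n 0 0)"
    proof (rule leI)
      fix x assume "x \<in> set (leftopts (SX 0 b c))"
      then have "x = gzero \<or> (0 < c \<and> x = SX 0 b (c - 1))" by (simp add: SX_L)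
      then show "\<not> le (M n 0 0) x"
      proof
        assume "x = gzero" then show ?thesis using nle_L[OF m0] le_refl by auto
      next
        assume c: "0 < c \<and> x = SX 0 b (c - 1)"
        show ?thesis
        proof
          assume "le (M n 0 0) x"
          then have "le (M n 0 0) (M (n - 1) 0 0)" using IH2 c le_trans eqv_le1 by blast
          then show False using nle_M[OF n0] by blast
        qed
      qed
    next
      fix y assume "y \<in> set (rightopts (M n 0 0))"
      then have y: "y = M (n - 1) 0 0" by (simp add: M_R)
      show "\<not> le y (SX 0 b c)"
      proof (cases "0 < b")
        case True
        have "SX 0 (b - 1) c \<in> set (rightopts (SX 0 b c))" using True by (simp add: SX_R)
        then show ?thesis using nle_R IH1[OF True] eqv_le1 y by blast
      next
        case False
        then have c: "0 < c" using less.prems n0 by simp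
        have "SX 0 b (c - 1) \<in> set (rightopts (SX 0 b c))" using c by (simp add: SX_R)
        then show ?thesis using nle_R IH2[OF c] eqv_le1 y by blast
      qed
    qed
    moreover have "le (M n 0 0) (SX 0 b c)"
    proof (rule leI)
      fix x assume "x \<in> set (leftopts (M n 0 0))"
      then have "x = gzero" by (simp add: M_L M_000)
      then show "\<not> le (SX 0 b c) x" using nle_L[OF g0] le_refl by auto
    next
      fix y assume "y \<in> set (rightopts (SX 0 b c))"
      then have "eqv y (M (n - 1) 0 0)" using IH1 IH2 by (auto simp: SX_R)
      then show "\<not> le y (M n 0 0)" using nle_R[OF M0_R[OF n0]] eqv_le2 by blast
    qed
    ultimately show ?thesis by (simp add: eqv_def)
  qed
qed

lemma SX0: "eqv (SX 0 b c) (M (b + c) 0 0)"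
  using SX0_aux by blast

lemma gzero_SX_L: "0 < a \<Longrightarrow> gzero \<in> set (leftopts (SX a b c))"
  by (simp add: SX_L)

lemma SX_R_form: "y \<in> set (rightopts (SX a b c)) \<Longrightarrow> \<exists>b' c'. y = SX a b' c'"
  by (auto simp: SX_R)

lemma zero_le_SX: "0 < a \<Longrightarrow> le gzero (SX a b c)"
proof (rule leI)
  fix x assume "x \<in> set (leftopts gzero)" then show "\<not> le (SX a b c) x" by (simp add: gzero_def)
next
  fix y assume "0 < a" "y \<in> set (rightopts (SX a b c))"
  then obtain b' c' where "y = SX a b' c'" using SX_R_form by blast
  then show "\<not> le y gzero" using nle_L[OF gzero_SX_L[OF \<open>0 < a\<close>]] le_refl by auto
qed

lemma gzero_star_L: "gzero \<in> set (leftopts gstar)" by (simp add: gstar_def)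
lemma gzero_star_R: "gzero \<in> set (rightopts gstar)" by (simp add: gstar_def)

lemma star_le_SX: "0 < a \<Longrightarrow> le gstar (SX a b c)"
proof (rule leI)
  fix x assume "0 < a" "x \<in> set (leftopts gstar)"
  then have "x = gzero" by (simp add: gstar_def)
  then show "\<not> le (SX a b c) x" using nle_L[OF gzero_SX_L[OF \<open>0 < a\<close>]] le_refl by auto
next
  fix y assume "0 < a" "y \<in> set (rightopts (SX a b c))"
  then obtain b' c' where "y = SX a b' c'" using SX_R_form by blast
  then show "\<not> le y gstar" using nle_R[OF gzero_star_R] zero_le_SX[OF \<open>0 < a\<close>] by blast
qed

lemma S_aux: "a + b + c = n \<Longrightarrow> le (SX a b c) (SX (Suc a) b (Suc c))"
proof (induction n arbitrary: a b c rule: less_induct)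
  case (less n)
  show ?case
  proof (rule leI)
    fix x assume "x \<in> set (leftopts (SX a b c))"
    then have "x = gzero \<or> (0 < a \<and> x = SX (a - 1) b c) \<or> (0 < c \<and> x = SX a b (c - 1))" by (simp add: SX_L)
    then show "\<not> le (SX (Suc a) b (Suc c)) x"
    proof (elim disjE)
      assume "x = gzero" then show ?thesis using nle_L[OF gzero_SX_L[of "Suc a" b "Suc c"]] le_refl by auto
    next
      assume h: "0 < a \<and> x = SX (a - 1) b c"
      have "SX a b (Suc c) \<in> set (leftopts (SX (Suc a) b (Suc c)))" by (simp add: SX_L)
      moreover have "le x (SX a b (Suc c))" using less.IH[of "a - 1 + b + c" "a - 1" b c] h less.prems by simp
      ultimately show ?thesis using nle_L by blast
    next
      assume h: "0 < c \<and> x = SX a b (c - 1)"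
      have "SX (Suc a) b c \<in> set (leftopts (SX (Suc a) b (Suc c)))" by (simp add: SX_L)
      moreover have "le x (SX (Suc a) b c)" using less.IH[of "a + b + (c - 1)" a b "c - 1"] h less.prems by simp
      ultimately show ?thesis using nle_L by blast
    qed
  next
    fix y assume "y \<in> set (rightopts (SX (Suc a) b (Suc c)))"
    then have "(0 < b \<and> y = SX (Suc a) (b - 1) (Suc c)) \<or> y = SX (Suc a) b c" by (simp add: SX_R)
    then show "\<not> le y (SX a b c)"
    proof (elim disjE)
      assume h: "0 < b \<and> y = SX (Suc a) (b - 1) (Suc c)"
      have "SX a (b - 1) c \<in> set (rightopts (SX a b c))" using h by (simp add: SX_R)
      moreover have "le (SX a (b - 1) c) y" using less.IH[of "a + (b - 1) + c" a "b - 1" c] h less.prems by simp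
      ultimately show ?thesis using nle_R by blast
    next
      assume h: "y = SX (Suc a) b c"
      show ?thesis
      proof (cases "0 < c")
        case True
        have "SX a b (c - 1) \<in> set (rightopts (SX a b c))" using True by (simp add: SX_R)
        moreover have "le (SX a b (c - 1)) y" using less.IH[of "a + b + (c - 1)" a b "c - 1"] h True less.prems by simp
        ultimately show ?thesis using nle_R by blast
      next
        case False
        have "SX a b c \<in> set (leftopts y)" using h False by (simp add: SX_L)
        then show ?thesis using nle_L le_refl by blast
      qed
    qed
  qed
qed

lemma S_lemma: "le (SX a b c) (SX (Suc a) b (Suc c))"
  using S_aux by blast

lemma Q_aux: "a + b + c = n \<Longrightarrow> 0 < c \<Longrightarrow> le (SX a b c) (SX (Suc a) b (c - 1))"
proof (induction n arbitrary: a b c rule: less_induct)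
  case (less n)
  show ?case
  proof (rule leI)
    fix x assume "x \<in> set (leftopts (SX a b c))"
    then have "x = gzero \<or> (0 < a \<and> x = SX (a - 1) b c) \<or> (0 < c \<and> x = SX a b (c - 1))" by (simp add: SX_L)
    then show "\<not> le (SX (Suc a) b (c - 1)) x"
    proof (elim disjE)
      assume "x = gzero" then show ?thesis using nle_L[OF gzero_SX_L[of "Suc a" b "c - 1"]] le_refl by auto
    next
      assume h: "0 < a \<and> x = SX (a - 1) b c"
      have "SX a b (c - 1) \<in> set (leftopts (SX (Suc a) b (c - 1)))" by (simp add: SX_L)
      moreover have "le x (SX a b (c - 1))" using less.IH[of "a - 1 + b + c" "a - 1" b c] h less.prems by simp
      ultimately show ?thesis using nle_L by blast
    next
      assume h: "0 < c \<and> x = SX a b (c - 1)"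
      have "SX a b (c - 1) \<in> set (leftopts (SX (Suc a) b (c - 1)))" by (simp add: SX_L)
      then show ?thesis using h nle_L le_refl by blast
    qed
  next
    fix y assume "y \<in> set (rightopts (SX (Suc a) b (c - 1)))"
    then have "(0 < b \<and> y = SX (Suc a) (b - 1) (c - 1)) \<or> (0 < c - 1 \<and> y = SX (Suc a) b (c - 1 - 1))" by (simp add: SX_R)
    then show "\<not> le y (SX a b c)"
    proof (elim disjE)
      assume h: "0 < b \<and> y = SX (Suc a) (b - 1) (c - 1)"
      have "SX a (b - 1) c \<in> set (rightopts (SX a b c))" using h by (simp add: SX_R)
      moreover have "le (SX a (b - 1) c) y" using less.IH[of "a + (b - 1) + c" a "b - 1" c] h less.prems by simp
      ultimately show ?thesis using nle_R by blast
    next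
      assume h: "0 < c - 1 \<and> y = SX (Suc a) b (c - 1 - 1)"
      have "SX a b (c - 1) \<in> set (rightopts (SX a b c))" using less.prems by (simp add: SX_R)
      moreover have "le (SX a b (c - 1)) y" using less.IH[of "a + b + (c - 1)" a b "c - 1"] h less.prems by simp
      ultimately show ?thesis using nle_R by blast
    qed
  qed
qed

lemma Q_lemma: "0 < c \<Longrightarrow> le (SX a b c) (SX (Suc a) b (c - 1))"
  using Q_aux by blast

lemma E_aux: "b + c = n \<Longrightarrow> 0 < a \<Longrightarrow> 0 < c \<Longrightarrow> eqv (SX a b c) (gplus (SX a b (c - 1)) gstar)"
proof (induction n arbitrary: b c rule: less_induct)
  case (less n)
  define X where "X = SX a b (c - 1)"
  have a: "0 < a" and c: "0 < c" using less.prems by auto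
  have IHb: "0 < b \<Longrightarrow> eqv (SX a (b - 1) c) (gplus (SX a (b - 1) (c - 1)) gstar)"
    using less.IH[of "b - 1 + c" "b - 1" c] less.prems by simp
  have IHc: "0 < c - 1 \<Longrightarrow> eqv X (gplus (SX a b (c - 1 - 1)) gstar)"
    using less.IH[of "b + (c - 1)" b "c - 1"] less.prems unfolding X_def by simp
  have X0: "eqv (gplus X gzero) X" by (rule plus_zero)
  have XL: "X \<in> set (leftopts (SX a b c))" using c unfolding X_def by (simp add: SX_L)
  have XR: "X \<in> set (rightopts (SX a b c))" using c unfolding X_def by (simp add: SX_R)
  have X0L: "gplus X gzero \<in> set (leftopts (gplus X gstar))" using L_plus2[OF gzero_star_L] .
  have X0R: "gplus X gzero \<in> set (rightopts (gplus X gstar))" using R_plus2[OF gzero_star_R] .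
  have "le (SX a b c) (gplus X gstar)"
  proof (rule leI)
    fix x assume "x \<in> set (leftopts (SX a b c))"
    then have "x = gzero \<or> x = SX (a - 1) b c \<or> x = X" using a unfolding X_def by (auto simp: SX_L)
    then have "le x X"
    proof (elim disjE)
      assume "x = gzero" then show ?thesis using zero_le_SX[OF a] unfolding X_def by simp
    next
      assume "x = SX (a - 1) b c" then show ?thesis using Q_lemma[OF c, of "a - 1" b] a unfolding X_def by simp
    qed (simp add: le_refl)
    then have "le x (gplus X gzero)" using X0 le_trans eqv_le2 by blast
    then show "\<not> le (gplus X gstar) x" using nle_L[OF X0L] by blast
  next
    fix y assume "y \<in> set (rightopts (gplus X gstar))"
    then consider (g) g where "g \<in> set (rightopts X)" "y = gplus g gstar" | (z) "y = gplus X gzero"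
      by (auto simp: mem_R_plus gstar_def)
    then show "\<not> le y (SX a b c)"
    proof cases
      case g
      then have "(0 < b \<and> g = SX a (b - 1) (c - 1)) \<or> (0 < c - 1 \<and> g = SX a b (c - 1 - 1))"
        unfolding X_def by (simp add: SX_R)
      then show ?thesis
      proof (elim disjE)
        assume h: "0 < b \<and> g = SX a (b - 1) (c - 1)"
        have "SX a (b - 1) c \<in> set (rightopts (SX a b c))" using h by (simp add: SX_R)
        moreover have "le (SX a (b - 1) c) y" using IHb h g(2) eqv_le1 by blast
        ultimately show ?thesis using nle_R by blast
      next
        assume h: "0 < c - 1 \<and> g = SX a b (c - 1 - 1)"
        have "eqv X y" using IHc h g(2) by simp
        then have "le X y" by (rule eqv_le1)
        then show ?thesis using nle_R[OF XR] by blast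
      qed
    next
      case z
      then show ?thesis using nle_R[OF XR] X0 eqv_le2 by blast
    qed
  qed
  moreover have "le (gplus X gstar) (SX a b c)"
  proof (rule leI)
    fix x assume "x \<in> set (leftopts (gplus X gstar))"
    then consider (g) g where "g \<in> set (leftopts X)" "x = gplus g gstar" | (z) "x = gplus X gzero"
      by (auto simp: mem_L_plus gstar_def)
    then show "\<not> le (SX a b c) x"
    proof cases
      case g
      then have "g = gzero \<or> g = SX (a - 1) b (c - 1) \<or> (0 < c - 1 \<and> g = SX a b (c - 1 - 1))"
        using a unfolding X_def by (auto simp: SX_L)
      then show ?thesis
      proof (elim disjE)
        assume h: "g = gzero"
        have "le x gstar" using zero_plus[of gstar] h g(2) eqv_le1 by blast
        then have "le x X" using star_le_SX[OF a] le_trans unfolding X_def by blast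
        then show ?thesis using nle_L[OF XL] by blast
      next
        assume h: "g = SX (a - 1) b (c - 1)"
        have w: "gplus g gzero \<in> set (rightopts x)" using g(2) R_plus2[OF gzero_star_R] by simp
        have "le (gplus g gzero) g" using plus_zero eqv_le1 by blast
        moreover have "le g (SX a b c)" using S_lemma[of "a - 1" b "c - 1"] h a c by simp
        ultimately have "le (gplus g gzero) (SX a b c)" using le_trans by blast
        then show ?thesis using nle_R[OF w] by blast
      next
        assume h: "0 < c - 1 \<and> g = SX a b (c - 1 - 1)"
        have "eqv X x" using IHc h g(2) by simp
        then have "le x X" by (rule eqv_le2)
        then show ?thesis using nle_L[OF XL] by blast
      qed
    next
      case z
      then show ?thesis using nle_L[OF XL] X0 eqv_le1 by blast
    qed
  next
    fix y assume "y \<in> set (rightopts (SX a b c))"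
    then have "(0 < b \<and> y = SX a (b - 1) c) \<or> y = X" using c unfolding X_def by (auto simp: SX_R)
    then show "\<not> le y (gplus X gstar)"
    proof (elim disjE)
      assume h: "0 < b \<and> y = SX a (b - 1) c"
      have "SX a (b - 1) (c - 1) \<in> set (rightopts X)" using h unfolding X_def by (simp add: SX_R)
      then have "gplus (SX a (b - 1) (c - 1)) gstar \<in> set (rightopts (gplus X gstar))" by (rule R_plus1)
      moreover have "le (gplus (SX a (b - 1) (c - 1)) gstar) y" using IHb h eqv_le2 by blast
      ultimately show ?thesis using nle_R by blast
    next
      assume "y = X"
      then show ?thesis using nle_R[OF X0R] X0 eqv_le1 by blast
    qed
  qed
  ultimately show ?case unfolding X_def by (simp add: eqv_def)
qed

lemma E_lemma: "0 < a \<Longrightarrow> 0 < c \<Longrightarrow> eqv (SX a b c) (gplus (SX a b (c - 1)) gstar)"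
  using E_aux by blast

lemma SX_parity: "0 < a \<Longrightarrow>
   (even c \<longrightarrow> eqv (SX a b c) (SX a b 0)) \<and> (odd c \<longrightarrow> eqv (SX a b c) (gplus (SX a b 0) gstar))"
proof (induction c)
  case 0
  then show ?case by (simp add: eqv_refl)
next
  case (Suc c)
  have e: "eqv (SX a b (Suc c)) (gplus (SX a b c) gstar)" using E_lemma[OF Suc.prems, of "Suc c" b] by simp
  show ?case
  proof (cases "even c")
    case True
    then have "eqv (SX a b c) (SX a b 0)" using Suc by blast
    then have "eqv (SX a b (Suc c)) (gplus (SX a b 0) gstar)" using e eqv_plus1 eqv_trans by blast
    then show ?thesis using True by simp
  next
    case False
    then have "eqv (SX a b c) (gplus (SX a b 0) gstar)" using Suc by blast
    then have "eqv (SX a b (Suc c)) (gplus (gplus (SX a b 0) gstar) gstar)" using e eqv_plus1 eqv_trans by blast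
    moreover have "eqv (gplus (gplus (SX a b 0) gstar) gstar) (gplus (SX a b 0) (gplus gstar gstar))" by (rule assoc)
    moreover have "eqv (gplus (SX a b 0) (gplus gstar gstar)) (gplus (SX a b 0) gzero)" using star_star eqv_plus2 by blast
    moreover have "eqv (gplus (SX a b 0) gzero) (SX a b 0)" by (rule plus_zero)
    ultimately have "eqv (SX a b (Suc c)) (SX a b 0)" using eqv_trans by blast
    then show ?thesis using False by simp
  qed
qed

lemma alice_swap: "alice_col (swapAB c) = bob_col c"
  by (cases c) (simp_all add: swapAB_def alice_col_def bob_col_def)
lemma bob_swap: "bob_col (swapAB c) = alice_col c"
  by (cases c) (simp_all add: swapAB_def alice_col_def bob_col_def)

lemma gneg_swap: "dgame_aux k V E (swapAB \<circ> col) D = gneg (dgame_aux k V E col D)"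
proof (induction k arbitrary: D)
  case 0
  then show ?case by simp
next
  case (Suc k)
  then show ?case by (simp add: alice_swap bob_swap comp_def)
qed

definition cnt :: "(nat \<Rightarrow> color) \<Rightarrow> color \<Rightarrow> nat set \<Rightarrow> nat" where
  "cnt col X U = card {v \<in> U. col v = X}"

lemma cnbhd_0: "cnbhd V star_edge 0 = V"
  by (auto simp: cnbhd_def star_edge_def)
lemma cnbhd_v: "0 \<in> V \<Longrightarrow> v \<in> V \<Longrightarrow> v \<noteq> 0 \<Longrightarrow> cnbhd V star_edge v = {0, v}"
  by (auto simp: cnbhd_def star_edge_def)

lemma dgame_full: "dgame_aux k V E col (D \<union> V) = Game [] []"
  by (cases k) (auto simp: playable_def cnbhd_def filter_empty_conv)

lemma dL: "finite V \<Longrightarrow> x \<in> set (leftopts (dgame_aux (Suc k) V E col D)) \<longleftrightarrow>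
   (\<exists>v\<in>V. alice_col (col v) \<and> playable V E D v \<and> x = dgame_aux k V E col (D \<union> cnbhd V E v))"
  by auto
lemma dR: "finite V \<Longrightarrow> x \<in> set (rightopts (dgame_aux (Suc k) V E col D)) \<longleftrightarrow>
   (\<exists>v\<in>V. bob_col (col v) \<and> playable V E D v \<and> x = dgame_aux k V E col (D \<union> cnbhd V E v))"
  by auto

lemma cnt_remove: "finite U \<Longrightarrow> v \<in> U \<Longrightarrow> cnt col X (U - {v}) = (if col v = X then cnt col X U - 1 else cnt col X U)"
proof -
  assume U: "finite U" and v: "v \<in> U"
  have "{w \<in> U - {v}. col w = X} = {w \<in> U. col w = X} - {v}" by auto
  then show ?thesis using U v by (auto simp: cnt_def card_Diff_singleton)
qed

lemma cnt_pos: "finite U \<Longrightarrow> 0 < cnt col X U \<longleftrightarrow> (\<exists>v\<in>U. col v = X)"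
  by (auto simp: cnt_def card_gt_0_iff)

lemma cnt_nonempty: "finite U \<Longrightarrow> U \<noteq> {} \<longleftrightarrow> 0 < cnt col CA U + cnt col CB U + cnt col CC U"
proof
  assume "finite U" "U \<noteq> {}"
  then obtain u where u: "u \<in> U" by blast
  then show "0 < cnt col CA U + cnt col CB U + cnt col CC U"
    using cnt_pos[OF \<open>finite U\<close>, of col "col u"] by (cases "col u") auto
next
  assume "finite U" "0 < cnt col CA U + cnt col CB U + cnt col CC U"
  then show "U \<noteq> {}" by (auto simp: cnt_def)
qed

lemma alice_cases: "alice_col x \<longleftrightarrow> x = CA \<or> x = CC" by (simp add: alice_col_def)
lemma bob_cases: "bob_col x \<longleftrightarrow> x = CB \<or> x = CC" by (simp add: bob_col_def)

lemma trans_main: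
  assumes V: "finite V" "0 \<in> V" and c0: "col 0 = CA"
  shows "0 \<in> D \<Longrightarrow> D \<subseteq> V \<Longrightarrow> card (V - D) \<le> k \<Longrightarrow>
     eqv (dgame_aux k V star_edge col D) (SX (cnt col CA (V - D)) (cnt col CB (V - D)) (cnt col CC (V - D)))"
proof (induction k arbitrary: D)
  case 0
  then have e: "V - D = {}" using V by simp
  show ?case unfolding e by (simp add: cnt_def SX_000 gzero_def eqv_refl)
next
  case (Suc k)
  define U where "U = V - D"
  have U: "finite U" using V U_def by simp
  have n0: "\<And>v. v \<in> V \<Longrightarrow> v \<noteq> 0 \<Longrightarrow> v \<in> U \<Longrightarrow> D \<union> cnbhd V star_edge v = D \<union> {v}"
    using cnbhd_v[OF V(2)] Suc.prems(1) by auto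
  have pl0: "playable V star_edge D 0 \<longleftrightarrow> U \<noteq> {}"
    using Suc.prems V unfolding playable_def cnbhd_0 U_def by auto
  have plv: "\<And>v. v \<in> V \<Longrightarrow> v \<noteq> 0 \<Longrightarrow> playable V star_edge D v \<longleftrightarrow> v \<in> U"
    using cnbhd_v[OF V(2)] Suc.prems(1) unfolding playable_def U_def by auto
  have full: "dgame_aux k V star_edge col (D \<union> cnbhd V star_edge 0) = gzero"
    unfolding cnbhd_0 by (simp add: dgame_full gzero_def)
  have step: "\<And>v. v \<in> U \<Longrightarrow> eqv (dgame_aux k V star_edge col (D \<union> {v}))
      (SX (cnt col CA (U - {v})) (cnt col CB (U - {v})) (cnt col CC (U - {v})))"
  proof -
    fix v assume v: "v \<in> U"
    have "V - (D \<union> {v}) = U - {v}" unfolding U_def by auto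
    moreover have "card (U - {v}) \<le> k" using Suc.prems(3) v U unfolding U_def by (simp add: card_Diff_singleton)
    moreover have "0 \<in> D \<union> {v}" "D \<union> {v} \<subseteq> V" using Suc.prems v U_def by auto
    ultimately show "?thesis v" using Suc.IH[of "D \<union> {v}"] by simp
  qed
  have v0: "\<And>v. v \<in> U \<Longrightarrow> v \<in> V \<and> v \<noteq> 0" using Suc.prems(1) U_def by auto
  let ?a = "cnt col CA U" and ?b = "cnt col CB U" and ?c = "cnt col CC U"
  have sum: "U \<noteq> {} \<longleftrightarrow> 0 < ?a + ?b + ?c" using cnt_nonempty[OF U] .
  show ?case unfolding U_def[symmetric]
  proof (rule eqv_intro)
    fix x assume "x \<in> set (leftopts (dgame_aux (Suc k) V star_edge col D))"
    then obtain v where v: "v \<in> V" "alice_col (col v)" "playable V star_edge D v"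
      "x = dgame_aux k V star_edge col (D \<union> cnbhd V star_edge v)" using dL[OF V(1)] by blast
    show "\<exists>y\<in>set (leftopts (SX ?a ?b ?c)). eqv x y"
    proof (cases "v = 0")
      case True
      then have xz: "x = gzero" and ne: "U \<noteq> {}" using v full pl0 by auto
      have "gzero \<in> set (leftopts (SX ?a ?b ?c))" using sum ne by (simp add: SX_L)
      then show ?thesis using xz eqv_refl by blast
    next
      case False
      then have vU: "v \<in> U" using plv v by blast
      then have x: "eqv x (SX (cnt col CA (U - {v})) (cnt col CB (U - {v})) (cnt col CC (U - {v})))"
        using step n0 v False by simp
      have "col v = CA \<or> col v = CC" using v(2) alice_cases by blast
      then show ?thesis
      proof
        assume cv: "col v = CA"
        then have "0 < ?a" using cnt_pos[OF U] vU by blast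
        then show ?thesis using x cv cnt_remove[OF U vU] by (auto simp: SX_L)
      next
        assume cv: "col v = CC"
        then have "0 < ?c" using cnt_pos[OF U] vU by blast
        then show ?thesis using x cv cnt_remove[OF U vU] by (auto simp: SX_L)
      qed
    qed
  next
    fix y assume y: "y \<in> set (leftopts (SX ?a ?b ?c))"
    then have ne: "U \<noteq> {}" using sum by (simp add: SX_L)
    have "y = gzero \<or> (0 < ?a \<and> y = SX (?a - 1) ?b ?c) \<or> (0 < ?c \<and> y = SX ?a ?b (?c - 1))"
      using y by (simp add: SX_L)
    then show "\<exists>x\<in>set (leftopts (dgame_aux (Suc k) V star_edge col D)). eqv x y"
    proof (elim disjE)
      assume "y = gzero"
      moreover have "dgame_aux k V star_edge col (D \<union> cnbhd V star_edge 0) \<in> set (leftopts (dgame_aux (Suc k) V star_edge col D))"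
        using dL[OF V(1)] V(2) c0 pl0 ne by (auto simp: alice_col_def)
      ultimately show ?thesis using full eqv_refl by metis
    next
      assume h: "0 < ?a \<and> y = SX (?a - 1) ?b ?c"
      then obtain v where vU: "v \<in> U" and cv: "col v = CA" using cnt_pos[OF U] by blast
      have mem: "dgame_aux k V star_edge col (D \<union> cnbhd V star_edge v) \<in> set (leftopts (dgame_aux (Suc k) V star_edge col D))"
        using dL[OF V(1)] v0[OF vU] plv vU cv by (auto simp: alice_col_def)
      have "eqv (dgame_aux k V star_edge col (D \<union> cnbhd V star_edge v)) y"
        using step[OF vU] n0 v0[OF vU] vU h cv cnt_remove[OF U vU] by simp
      then show ?thesis using mem by blast
    next
      assume h: "0 < ?c \<and> y = SX ?a ?b (?c - 1)"
      then obtain v where vU: "v \<in> U" and cv: "col v = CC" using cnt_pos[OF U] by blast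
      have mem: "dgame_aux k V star_edge col (D \<union> cnbhd V star_edge v) \<in> set (leftopts (dgame_aux (Suc k) V star_edge col D))"
        using dL[OF V(1)] v0[OF vU] plv vU cv by (auto simp: alice_col_def)
      have "eqv (dgame_aux k V star_edge col (D \<union> cnbhd V star_edge v)) y"
        using step[OF vU] n0 v0[OF vU] vU h cv cnt_remove[OF U vU] by simp
      then show ?thesis using mem by blast
    qed
  next
    fix x assume "x \<in> set (rightopts (dgame_aux (Suc k) V star_edge col D))"
    then obtain v where v: "v \<in> V" "bob_col (col v)" "playable V star_edge D v"
      "x = dgame_aux k V star_edge col (D \<union> cnbhd V star_edge v)" using dR[OF V(1)] by blast
    have "v \<noteq> 0"
    proof
      assume "v = 0" then show False using v(2) c0 by (simp add: bob_col_def)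
    qed
    then have vU: "v \<in> U" using plv v by blast
    then have x: "eqv x (SX (cnt col CA (U - {v})) (cnt col CB (U - {v})) (cnt col CC (U - {v})))"
      using step n0 v \<open>v \<noteq> 0\<close> by simp
    have "col v = CB \<or> col v = CC" using v(2) bob_cases by blast
    then show "\<exists>y\<in>set (rightopts (SX ?a ?b ?c)). eqv x y"
    proof
      assume cv: "col v = CB"
      then have "0 < ?b" using cnt_pos[OF U] vU by blast
      then show ?thesis using x cv cnt_remove[OF U vU] by (auto simp: SX_R)
    next
      assume cv: "col v = CC"
      then have "0 < ?c" using cnt_pos[OF U] vU by blast
      then show ?thesis using x cv cnt_remove[OF U vU] by (auto simp: SX_R)
    qed
  next
    fix y assume y: "y \<in> set (rightopts (SX ?a ?b ?c))"
    have "(0 < ?b \<and> y = SX ?a (?b - 1) ?c) \<or> (0 < ?c \<and> y = SX ?a ?b (?c - 1))"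
      using y by (simp add: SX_R)
    then show "\<exists>x\<in>set (rightopts (dgame_aux (Suc k) V star_edge col D)). eqv x y"
    proof (elim disjE)
      assume h: "0 < ?b \<and> y = SX ?a (?b - 1) ?c"
      then obtain v where vU: "v \<in> U" and cv: "col v = CB" using cnt_pos[OF U] by blast
      have mem: "dgame_aux k V star_edge col (D \<union> cnbhd V star_edge v) \<in> set (rightopts (dgame_aux (Suc k) V star_edge col D))"
        using dR[OF V(1)] v0[OF vU] plv vU cv by (auto simp: bob_col_def)
      have "eqv (dgame_aux k V star_edge col (D \<union> cnbhd V star_edge v)) y"
        using step[OF vU] n0 v0[OF vU] vU h cv cnt_remove[OF U vU] by simp
      then show ?thesis using mem by blast
    next
      assume h: "0 < ?c \<and> y = SX ?a ?b (?c - 1)"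
      then obtain v where vU: "v \<in> U" and cv: "col v = CC" using cnt_pos[OF U] by blast
      have mem: "dgame_aux k V star_edge col (D \<union> cnbhd V star_edge v) \<in> set (rightopts (dgame_aux (Suc k) V star_edge col D))"
        using dR[OF V(1)] v0[OF vU] plv vU cv by (auto simp: bob_col_def)
      have "eqv (dgame_aux k V star_edge col (D \<union> cnbhd V star_edge v)) y"
        using step[OF vU] n0 v0[OF vU] vU h cv cnt_remove[OF U vU] by simp
      then show ?thesis using mem by blast
    qed
  qed
qed

lemma init_eq:
  assumes V: "finite V" "0 \<in> V" "V - {0} \<noteq> {}"
  shows "dom_game V star_edge col = dgame_aux (card V) V star_edge col {0}"
proof -
  have "V \<noteq> {}" using V(2) by blast
  then have "card V > 0" using V(1) by (simp add: card_gt_0_iff)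
  then obtain k where k: "card V = Suc k" by (cases "card V") auto
  have vin: "\<And>v. v \<in> V \<Longrightarrow> v \<in> cnbhd V star_edge v" by (simp add: cnbhd_def)
  have zin: "\<And>v. v \<in> V \<Longrightarrow> 0 \<in> cnbhd V star_edge v"
    using V(2) by (auto simp: cnbhd_def star_edge_def)
  have p: "\<And>v. v \<in> V \<Longrightarrow> playable V star_edge {} v \<longleftrightarrow> playable V star_edge {0} v"
  proof -
    fix v assume v: "v \<in> V"
    show "playable V star_edge {} v \<longleftrightarrow> playable V star_edge {0} v"
    proof (cases "v = 0")
      case True
      then have c: "cnbhd V star_edge v = V" using cnbhd_0 by simp
      have "\<not> V \<subseteq> {0}" "\<not> V \<subseteq> {}" using V(3) v by auto
      then show ?thesis unfolding playable_def c using v by simp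
    next
      case False
      then have "\<not> cnbhd V star_edge v \<subseteq> {0}" "\<not> cnbhd V star_edge v \<subseteq> {}" using vin[OF v] by auto
      then show ?thesis unfolding playable_def using v by simp
    qed
  qed
  have n: "\<And>v. v \<in> V \<Longrightarrow> {} \<union> cnbhd V star_edge v = {0} \<union> cnbhd V star_edge v"
    using zin by blast
  have s: "set (sorted_list_of_set V) = V" using V by simp
  have f1: "filter (\<lambda>v. alice_col (col v) \<and> playable V star_edge {} v) (sorted_list_of_set V)
        = filter (\<lambda>v. alice_col (col v) \<and> playable V star_edge {0} v) (sorted_list_of_set V)"
    using p s by (intro filter_cong) auto
  have f2: "filter (\<lambda>v. bob_col (col v) \<and> playable V star_edge {} v) (sorted_list_of_set V)
        = filter (\<lambda>v. bob_col (col v) \<and> playable V star_edge {0} v) (sorted_list_of_set V)"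
    using p s by (intro filter_cong) auto
  have m: "\<And>xs. set xs \<subseteq> V \<Longrightarrow> map (\<lambda>v. dgame_aux k V star_edge col ({} \<union> cnbhd V star_edge v)) xs
      = map (\<lambda>v. dgame_aux k V star_edge col ({0} \<union> cnbhd V star_edge v)) xs"
    using n by (intro map_cong) auto
  show ?thesis unfolding dom_game_def k dgame_aux.simps f1 f2
    by (subst m, simp add: s)+ (rule refl)
qed

lemma neg_up: "eqv (gneg (up_times m)) (M 0 m 0)"
proof (induction m)
  case 0
  then show ?case by (simp add: gzero_def M_000[unfolded gzero_def] eqv_refl)
next
  case (Suc m)
  have "gneg (up_times (Suc m)) = gplus (M 0 (Suc 0) 0) (gneg (up_times m))"
    by (simp add: gneg_plus M_010)
  moreover have "eqv (gplus (M 0 (Suc 0) 0) (gneg (up_times m))) (gplus (M 0 (Suc 0) 0) (M 0 m 0))"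
    using Suc eqv_plus2 by blast
  moreover have "eqv (gplus (M 0 (Suc 0) 0) (M 0 m 0)) (M 0 (Suc m) 0)"
    using Madd[of 0 "Suc 0" 0 m 0] by simp
  ultimately show ?case using eqv_trans by metis
qed

lemma card_colors: "finite U \<Longrightarrow> card U = cnt col CA U + cnt col CB U + cnt col CC U"
proof -
  assume U: "finite U"
  have e: "U = {v \<in> U. col v = CA} \<union> ({v \<in> U. col v = CB} \<union> {v \<in> U. col v = CC})"
    by (auto intro: color.exhaust)
  have "card U = card {v \<in> U. col v = CA} + card ({v \<in> U. col v = CB} \<union> {v \<in> U. col v = CC})"
    using U by (subst e, intro card_Un_disjoint) auto
  also have "card ({v \<in> U. col v = CB} \<union> {v \<in> U. col v = CC}) = card {v \<in> U. col v = CB} + card {v \<in> U. col v = CC}"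
    using U by (intro card_Un_disjoint) auto
  finally show ?thesis by (simp add: cnt_def)
qed

theorem theorem8:
  fixes n a b c :: nat and col :: "nat \<Rightarrow> color"
  assumes leavesA: "card {v \<in> {1..n}. col v = CA} = a"
      and leavesB: "card {v \<in> {1..n}. col v = CB} = b"
      and leavesC: "card {v \<in> {1..n}. col v = CC} = c"
      and cpos: "c \<ge> 1"
  defines "J \<equiv> dom_game ({0..n} - {v \<in> {1..n}. col v = CC}) star_edge col"
  shows "(col 0 = CA \<and> a = 0 \<and> even n \<longrightarrow>
            dom_game {0..n} star_edge col =\<^sub>g up_times (n - 1))
       \<and> (col 0 = CA \<and> a = 0 \<and> odd n \<longrightarrow>
            dom_game {0..n} star_edge col =\<^sub>g gplus (up_times (n - 1)) gstar)
       \<and> (col 0 = CA \<and> a > 0 \<and> even c \<longrightarrow>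
            dom_game {0..n} star_edge col =\<^sub>g J)
       \<and> (col 0 = CA \<and> a > 0 \<and> odd c \<longrightarrow>
            dom_game {0..n} star_edge col =\<^sub>g gplus J gstar)
       \<and> (col 0 = CB \<longrightarrow>
            dom_game {0..n} star_edge col =\<^sub>g gneg (dom_game {0..n} star_edge (swapAB \<circ> col)))"
proof -
  define V where "V = {0..n}"
  define G where "G = dom_game V star_edge col"
  have Vfin: "finite V" and V0: "0 \<in> V" unfolding V_def by auto
  have "{v \<in> {1..n}. col v = CC} \<noteq> {}" using leavesC cpos by (metis card.empty not_one_le_zero)
  then have n1: "1 \<le> n" by auto
  have Vd: "V - {0} = {1..n}" unfolding V_def by auto
  have Vne: "V - {0} \<noteq> {}" using Vd n1 by auto
  have cntV: "cnt col CA (V - {0}) = a" "cnt col CB (V - {0}) = b" "cnt col CC (V - {0}) = c"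
    unfolding Vd cnt_def using leavesA leavesB leavesC by auto
  have cardV: "card (V - {0}) \<le> card V" using Vfin by (simp add: card_Diff1_le)
  have domX: "col 0 = CA \<Longrightarrow> eqv G (SX a b c)"
  proof -
    assume c0: "col 0 = CA"
    have "G = dgame_aux (card V) V star_edge col {0}" unfolding G_def using init_eq[OF Vfin V0 Vne] .
    moreover have "eqv (dgame_aux (card V) V star_edge col {0}) (SX a b c)"
      using trans_main[where V=V and col=col and D="{0}" and k="card V"] Vfin V0 c0 cardV cntV by simp
    ultimately show ?thesis by simp
  qed
  have nabc: "n = a + b + c"
    using card_colors[of "V - {0}" col] cntV Vd by simp
  have A1: "col 0 = CA \<and> a = 0 \<and> even n \<longrightarrow> G =\<^sub>g up_times (n - 1)"
  proof
    assume h: "col 0 = CA \<and> a = 0 \<and> even n"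
    have "eqv G (M n 0 0)" using domX h SX0[of b c] nabc eqv_trans by auto
    then have "eqv (gplus G (gneg (up_times (n - 1)))) (gplus (M n 0 0) (M 0 (n - 1) 0))"
      using neg_up eqv_plus by blast
    moreover have "eqv (gplus (M n 0 0) (M 0 (n - 1) 0)) (M n (n - 1) 0)" using Madd[of n 0 0 "n - 1" 0] by simp
    ultimately have e: "eqv (gplus G (gneg (up_times (n - 1)))) (M n (n - 1) 0)" using eqv_trans by blast
    have "\<not> LW n (n - 1) 0" "\<not> RW n (n - 1) 0" using h n1 unfolding LW_def RW_def xval_def by auto
    then show "G =\<^sub>g up_times (n - 1)"
      unfolding game_eq_def using spw_eqv[OF e] M_outcome_aux[OF refl, of n "n - 1" 0] by blast
  qed
  have A2: "col 0 = CA \<and> a = 0 \<and> odd n \<longrightarrow> G =\<^sub>g gplus (up_times (n - 1)) gstar"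
  proof
    assume h: "col 0 = CA \<and> a = 0 \<and> odd n"
    have "eqv G (M n 0 0)" using domX h SX0[of b c] nabc eqv_trans by auto
    moreover have "gneg (gplus (up_times (n - 1)) gstar) = gplus (gneg (up_times (n - 1))) (M 0 0 (Suc 0))"
      by (simp add: gneg_plus gneg_star M_001)
    moreover have "eqv (gplus (gneg (up_times (n - 1))) (M 0 0 (Suc 0))) (gplus (M 0 (n - 1) 0) (M 0 0 (Suc 0)))"
      using neg_up eqv_plus1 by blast
    moreover have "eqv (gplus (M 0 (n - 1) 0) (M 0 0 (Suc 0))) (M 0 (n - 1) (Suc 0))"
      using Madd[of 0 "n - 1" 0 0 "Suc 0"] by simp
    ultimately have "eqv (gplus G (gneg (gplus (up_times (n - 1)) gstar))) (gplus (M n 0 0) (M 0 (n - 1) (Suc 0)))"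
      using eqv_plus eqv_trans by metis
    moreover have "eqv (gplus (M n 0 0) (M 0 (n - 1) (Suc 0))) (M n (n - 1) (Suc 0))"
      using Madd[of n 0 0 "n - 1" "Suc 0"] by simp
    ultimately have e: "eqv (gplus G (gneg (gplus (up_times (n - 1)) gstar))) (M n (n - 1) (Suc 0))"
      using eqv_trans by blast
    have "\<not> LW n (n - 1) (Suc 0)" "\<not> RW n (n - 1) (Suc 0)" using h n1 unfolding LW_def RW_def xval_def by auto
    then show "G =\<^sub>g gplus (up_times (n - 1)) gstar"
      unfolding game_eq_def using spw_eqv[OF e] M_outcome_aux[OF refl, of n "n - 1" "Suc 0"] by blast
  qed
  define V' where "V' = {0..n} - {v \<in> {1..n}. col v = CC}"
  have JX: "col 0 = CA \<Longrightarrow> 0 < a \<Longrightarrow> eqv J (SX a b 0)"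
  proof -
    assume c0: "col 0 = CA" and a0: "0 < a"
    have V'fin: "finite V'" and V'0: "0 \<in> V'" unfolding V'_def by auto
    have V'd: "V' - {0} = {v \<in> {1..n}. col v \<noteq> CC}" unfolding V'_def by auto
    have "{v \<in> {1..n}. col v = CA} \<noteq> {}" using a0 leavesA by (metis card.empty less_numeral_extra(3))
    then have V'ne: "V' - {0} \<noteq> {}" unfolding V'd by auto
    have e1: "{v \<in> V' - {0}. col v = CA} = {v \<in> {1..n}. col v = CA}" unfolding V'd by auto
    have e2: "{v \<in> V' - {0}. col v = CB} = {v \<in> {1..n}. col v = CB}" unfolding V'd by auto
    have e3: "{v \<in> V' - {0}. col v = CC} = {}" unfolding V'd by auto
    have cntV': "cnt col CA (V' - {0}) = a" "cnt col CB (V' - {0}) = b" "cnt col CC (V' - {0}) = 0"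
      unfolding cnt_def e1 e2 e3 using leavesA leavesB by auto
    have cardV': "card (V' - {0}) \<le> card V'" using V'fin by (simp add: card_Diff1_le)
    have "J = dgame_aux (card V') V' star_edge col {0}" unfolding J_def V'_def[symmetric] using init_eq[OF V'fin V'0 V'ne] .
    moreover have "eqv (dgame_aux (card V') V' star_edge col {0}) (SX a b 0)"
      using trans_main[where V=V' and col=col and D="{0}" and k="card V'"] V'fin V'0 c0 cardV' cntV' by simp
    ultimately show ?thesis by simp
  qed
  have A3: "col 0 = CA \<and> a > 0 \<and> even c \<longrightarrow> G =\<^sub>g J"
  proof
    assume h: "col 0 = CA \<and> a > 0 \<and> even c"
    have "eqv G (SX a b 0)" using domX h SX_parity[of a c b] eqv_trans by blast
    then have "eqv G J" using JX h eqv_sym eqv_trans by blast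
    then show "G =\<^sub>g J" by (rule eqv_game_eq)
  qed
  have A4: "col 0 = CA \<and> a > 0 \<and> odd c \<longrightarrow> G =\<^sub>g gplus J gstar"
  proof
    assume h: "col 0 = CA \<and> a > 0 \<and> odd c"
    have "eqv G (gplus (SX a b 0) gstar)" using domX h SX_parity[of a c b] eqv_trans by blast
    moreover have "eqv (gplus J gstar) (gplus (SX a b 0) gstar)" using JX h eqv_plus1 by blast
    ultimately have "eqv G (gplus J gstar)" using eqv_sym eqv_trans by blast
    then show "G =\<^sub>g gplus J gstar" by (rule eqv_game_eq)
  qed
  have A5: "col 0 = CB \<longrightarrow> G =\<^sub>g gneg (dom_game V star_edge (swapAB \<circ> col))"
  proof
    have "gneg (dom_game V star_edge (swapAB \<circ> col)) = G"
      unfolding G_def dom_game_def gneg_swap by simp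
    then show "G =\<^sub>g gneg (dom_game V star_edge (swapAB \<circ> col))" using eqv_game_eq eqv_refl by simp
  qed
  show ?thesis using A1 A2 A3 A4 A5 unfolding G_def V_def by blast
qed

end
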